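(* Let $\mathcal{H}_1,\mathcal{H}_2$ be separable Hilbert spaces with orthonormal bases $\{e_{1,n}\}_{n>0}$, $\{e_{2,n}\}_{n>0}$. For $j\in\{1,2\}$, let $\{f_{j,1,n}\}_{n>0},\dots,\{f_{j,r,n}\}_{n>0}$ be linearly independent sequences in $\mathcal{H}_j$, and let $\mathcal{F}=\{f_{m,n}\}_{m,n>0}$ with $f_{m,n}=\sum_{k=1}^r f_{1,k,m}\otimes f_{2,k,n}$ in $\mathcal{H}_1\otimes\mathcal{H}_2$. Let $F_{j,k}$ be the operator associated to $\{e_{j,n}\}$ and $\{f_{j,k,n}\}$. (i) $\mathcal{F}$ is a Bessel sequence in $\mathcal{H}_1\otimes\mathcal{H}_2$ if and only if $\{f_{j,k,n}\}_{n>0}$ is a Bessel sequence in $\mathcal{H}_j$ for each $(j,k)\in\{1,2\}\times\{1,\dots,r\}$. (ii) If $\mathcal{F}$ is a frame, then (each $F_{j,k}$ is bounded and) there exist operators $L_{j,k}\in\mathcal{B}(\mathcal{H}_j)$ with $\sum_{k=1}^r L_{j,k}F_{j,k}=I_{\mathcal{H}_j}$ for each $j\in\{1,2\}$; moreover, for each $j=1,2$ the concatenated sequence $\{f_{j,k,m}\}_{1\le k\le r,\,m>0}$ is a frame in $\mathcal{H}_j$. (iii) If $\mathcal{F}$ is a Riesz basis of $\mathcal{H}_1\otimes\mathcal{H}_2$, then in addition to the conclusion of (ii) there exist operators $R_{j,k}\in\mathcal{B}(\mathcal{H}_j)$ with $\sum_{k=1}^r F_{j,k}R_{j,k}=I_{\mathcal{H}_j}$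 for each $j\in\{1,2\}$.
   Context: Given an orthonormal basis $\{e_n\}$ of $\mathcal{H}$ and a sequence $\{f_n\}$ in $\mathcal{H}$, the associated operator is $F(f)=\sum_n\langle f,f_n\rangle e_n$ on its domain $\{f: \sum_n|\langle f,f_n\rangle|^2<\infty\}$; it is bounded exactly when $\{f_n\}$ is a Bessel sequence. Bessel sequence: $\sum_n|\langle f,f_n\rangle|^2\le B\|f\|^2$ for all $f$; frame: additionally $A\|f\|^2\le\sum_n|\langle f,f_n\rangle|^2$ with $A>0$; Riesz basis: a frame which is the image of an orthonormal basis under a bounded invertible operator. Linear independence of sequences is meant in the vector space of sequences in $\mathcal{H}_j$. *)

theory Defs
  imports "HOL-Analysis.Analysis"
begin

text \<open>Concrete model: a separable infinite-dimensional (complex) Hilbert space with a fixed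
  orthonormal basis is identified with l2 over an index type, the basis being the standard one.
  H_j = l2(nat), H_1 (x) H_2 = l2(nat \<times> nat) with (x \<otimes> y)(i,i') = x i * y i'.\<close>

definition is_l2 :: "('i \<Rightarrow> complex) \<Rightarrow> bool" where
  "is_l2 x \<longleftrightarrow> (\<lambda>i. (cmod (x i))^2) summable_on UNIV"

definition l2_normsq :: "('i \<Rightarrow> complex) \<Rightarrow> real" where
  "l2_normsq x = infsum (\<lambda>i. (cmod (x i))^2) UNIV"

definition l2_inner :: "('i \<Rightarrow> complex) \<Rightarrow> ('i \<Rightarrow> complex) \<Rightarrow> complex" where
  "l2_inner x y = infsum (\<lambda>i. x i * cnj (y i)) UNIV"

definition bessel_on :: "'j set \<Rightarrow> ('j \<Rightarrow> 'i \<Rightarrow> complex) \<Rightarrow> bool" where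
  "bessel_on J f \<longleftrightarrow> (\<forall>j\<in>J. is_l2 (f j)) \<and>
     (\<exists>B. \<forall>x. is_l2 x \<longrightarrow>
        (\<lambda>j. (cmod (l2_inner x (f j)))^2) summable_on J \<and>
        infsum (\<lambda>j. (cmod (l2_inner x (f j)))^2) J \<le> B * l2_normsq x)"

definition frame_on :: "'j set \<Rightarrow> ('j \<Rightarrow> 'i \<Rightarrow> complex) \<Rightarrow> bool" where
  "frame_on J f \<longleftrightarrow> bessel_on J f \<and>
     (\<exists>A>0. \<forall>x. is_l2 x \<longrightarrow> A * l2_normsq x \<le> infsum (\<lambda>j. (cmod (l2_inner x (f j)))^2) J)"

text \<open>Bounded linear operators on l2 (only their action on l2 matters).\<close>
definition bounded_op :: "(('i \<Rightarrow> complex) \<Rightarrow> ('k \<Rightarrow> complex)) \<Rightarrow> bool" where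
  "bounded_op T \<longleftrightarrow> (\<forall>x. is_l2 x \<longrightarrow> is_l2 (T x)) \<and>
     (\<forall>x y a b. is_l2 x \<longrightarrow> is_l2 y \<longrightarrow>
        T (\<lambda>i. a * x i + b * y i) = (\<lambda>i. a * T x i + b * T y i)) \<and>
     (\<exists>C. \<forall>x. is_l2 x \<longrightarrow> l2_normsq (T x) \<le> C * l2_normsq x)"

definition bounded_invertible_op :: "(('i \<Rightarrow> complex) \<Rightarrow> ('i \<Rightarrow> complex)) \<Rightarrow> bool" where
  "bounded_invertible_op T \<longleftrightarrow> bounded_op T \<and>
     (\<exists>S. bounded_op S \<and> (\<forall>x. is_l2 x \<longrightarrow> S (T x) = x \<and> T (S x) = x))"

definition orthonormal_basis_on :: "'j set \<Rightarrow> ('j \<Rightarrow> 'i \<Rightarrow> complex) \<Rightarrow> bool" where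
  "orthonormal_basis_on J u \<longleftrightarrow> (\<forall>j\<in>J. is_l2 (u j)) \<and>
     (\<forall>j\<in>J. \<forall>j'\<in>J. l2_inner (u j) (u j') = (if j = j' then 1 else 0)) \<and>
     (\<forall>x. is_l2 x \<longrightarrow> (\<forall>j\<in>J. l2_inner x (u j) = 0) \<longrightarrow> x = (\<lambda>i. 0))"

definition riesz_basis_on :: "'j set \<Rightarrow> ('j \<Rightarrow> 'i \<Rightarrow> complex) \<Rightarrow> bool" where
  "riesz_basis_on J f \<longleftrightarrow> frame_on J f \<and>
     (\<exists>u T. orthonormal_basis_on J u \<and> bounded_invertible_op T \<and> (\<forall>j\<in>J. f j = T (u j)))"

text \<open>Operator associated to the standard orthonormal basis and a sequence f:
  F x = \<Sum>n <x, f n> e_n, i.e. the coefficient sequence.\<close>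
definition assoc_op :: "(nat \<Rightarrow> 'i \<Rightarrow> complex) \<Rightarrow> ('i \<Rightarrow> complex) \<Rightarrow> (nat \<Rightarrow> complex)" where
  "assoc_op f x = (\<lambda>n. l2_inner x (f n))"

definition lin_indep_seqs :: "nat \<Rightarrow> (nat \<Rightarrow> nat \<Rightarrow> 'i \<Rightarrow> complex) \<Rightarrow> bool" where
  "lin_indep_seqs r f \<longleftrightarrow>
     (\<forall>c :: nat \<Rightarrow> complex. (\<forall>n i. (\<Sum>k<r. c k * f k n i) = 0) \<longrightarrow> (\<forall>k<r. c k = 0))"

definition tensor_seq :: "nat \<Rightarrow> (nat \<Rightarrow> nat \<Rightarrow> nat \<Rightarrow> complex) \<Rightarrow> (nat \<Rightarrow> nat \<Rightarrow> nat \<Rightarrow> complex)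
    \<Rightarrow> (nat \<times> nat) \<Rightarrow> (nat \<times> nat) \<Rightarrow> complex" where
  "tensor_seq r f1 f2 = (\<lambda>(m, n) (i, i'). \<Sum>k<r. f1 k m i * f2 k n i')"

definition left_inverse_property :: "nat \<Rightarrow> (nat \<Rightarrow> nat \<Rightarrow> nat \<Rightarrow> complex) \<Rightarrow> bool" where
  "left_inverse_property r f \<longleftrightarrow>
     (\<forall>k<r. bounded_op (assoc_op (f k))) \<and>
     (\<exists>L :: nat \<Rightarrow> (nat \<Rightarrow> complex) \<Rightarrow> (nat \<Rightarrow> complex).
        (\<forall>k<r. bounded_op (L k)) \<and>
        (\<forall>x. is_l2 x \<longrightarrow> (\<lambda>i. \<Sum>k<r. L k (assoc_op (f k) x) i) = x)) \<and>
     frame_on {(k, m). k < r} (\<lambda>(k, m). f k m)"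

definition right_inverse_property :: "nat \<Rightarrow> (nat \<Rightarrow> nat \<Rightarrow> nat \<Rightarrow> complex) \<Rightarrow> bool" where
  "right_inverse_property r f \<longleftrightarrow>
     (\<exists>R :: nat \<Rightarrow> (nat \<Rightarrow> complex) \<Rightarrow> (nat \<Rightarrow> complex).
        (\<forall>k<r. bounded_op (R k)) \<and>
        (\<forall>x. is_l2 x \<longrightarrow> (\<lambda>i. \<Sum>k<r. assoc_op (f k) (R k x) i) = x))"

end

theory Submission
  imports Defs
begin


definition nrm :: "('i \<Rightarrow> complex) \<Rightarrow> real" where
  "nrm x = sqrt (l2_normsq x)"

definition trunc :: "'i set \<Rightarrow> ('i \<Rightarrow> complex) \<Rightarrow> 'i \<Rightarrow> complex" where
  "trunc F x = (\<lambda>i. if i \<in> F then x i else 0)"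

definition ev :: "'i \<Rightarrow> 'i \<Rightarrow> complex" where
  "ev i0 = (\<lambda>i. if i = i0 then 1 else 0)"

lemma nsq_nonneg: "l2_normsq x \<ge> 0"
  unfolding l2_normsq_def by (rule infsum_nonneg) auto

lemma nrm_nonneg: "nrm x \<ge> 0"
  unfolding nrm_def using nsq_nonneg by simp

lemma nrm_sq: "(nrm x)^2 = l2_normsq x"
  unfolding nrm_def using nsq_nonneg by simp

lemma is_l2_zero[simp]: "is_l2 (\<lambda>i. 0)"
  unfolding is_l2_def by simp

lemma nsq_zero[simp]: "l2_normsq (\<lambda>i. 0) = 0"
  unfolding l2_normsq_def by simp

lemma sq_sum_le: fixes p q :: real shows "(p + q)^2 \<le> 2 * p^2 + 2 * q^2"
proof -
  have "0 \<le> (p - q)^2" by simp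
  thus ?thesis by (simp add: power2_diff power2_sum)
qed

lemma prod_le_sq: fixes p q :: real shows "p * q \<le> p^2 + q^2"
proof -
  have "0 \<le> (p - q)^2" by simp
  hence "2 * p * q \<le> p^2 + q^2" by (simp add: power2_diff)
  moreover have "0 \<le> p^2" "0 \<le> q^2" by simp_all
  ultimately show ?thesis by linarith
qed

lemma sq_lin_bound:
  fixes a b u v :: complex
  shows "(cmod (a * u + b * v))^2 \<le> 2 * (cmod a)^2 * (cmod u)^2 + 2 * (cmod b)^2 * (cmod v)^2"
proof -
  have "cmod (a * u + b * v) \<le> cmod a * cmod u + cmod b * cmod v"
    by (metis norm_mult norm_triangle_ineq)
  hence "(cmod (a * u + b * v))^2 \<le> (cmod a * cmod u + cmod b * cmod v)^2"
    by (simp add: power_mono)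
  also have "\<dots> \<le> 2 * (cmod a * cmod u)^2 + 2 * (cmod b * cmod v)^2"
    by (rule sq_sum_le)
  also have "\<dots> = 2 * (cmod a)^2 * (cmod u)^2 + 2 * (cmod b)^2 * (cmod v)^2"
    by (simp add: power_mult_distrib)
  finally show ?thesis .
qed

lemma is_l2_lin:
  assumes "is_l2 x" "is_l2 y"
  shows "is_l2 (\<lambda>i. a * x i + b * y i)"
proof -
  have s: "(\<lambda>i. 2 * (cmod a)^2 * (cmod (x i))^2 + 2 * (cmod b)^2 * (cmod (y i))^2) summable_on UNIV"
    using assms unfolding is_l2_def
    by (intro summable_on_add summable_on_cmult_right) auto
  show ?thesis unfolding is_l2_def
    by (rule summable_on_comparison_test[OF s]) (auto intro: sq_lin_bound)
qed

lemma is_l2_add: "is_l2 x \<Longrightarrow> is_l2 y \<Longrightarrow> is_l2 (\<lambda>i. x i + y i)"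
  using is_l2_lin[of x y 1 1] by simp

lemma is_l2_diff: "is_l2 x \<Longrightarrow> is_l2 y \<Longrightarrow> is_l2 (\<lambda>i. x i - y i)"
  using is_l2_lin[of x y 1 "-1"] by simp

lemma is_l2_scale: "is_l2 x \<Longrightarrow> is_l2 (\<lambda>i. a * x i)"
  using is_l2_lin[of x x a 0] by simp

lemma is_l2_sum: "finite T \<Longrightarrow> (\<And>t. t \<in> T \<Longrightarrow> is_l2 (x t)) \<Longrightarrow> is_l2 (\<lambda>i. \<Sum>t\<in>T. x t i)"
  by (induction T rule: finite_induct) (auto intro: is_l2_add)

lemma is_l2_cnj: "is_l2 x \<Longrightarrow> is_l2 (\<lambda>i. cnj (x i))"
  unfolding is_l2_def by simp

lemma summable_prod:
  assumes "is_l2 x" "is_l2 y"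
  shows "(\<lambda>i. x i * cnj (y i)) summable_on UNIV"
proof -
  have s: "(\<lambda>i. (cmod (x i))^2 + (cmod (y i))^2) summable_on UNIV"
    using assms unfolding is_l2_def by (intro summable_on_add) auto
  have "(\<lambda>i. norm (x i * cnj (y i))) summable_on UNIV"
  proof (rule summable_on_comparison_test[OF s])
    fix i
    show "norm (x i * cnj (y i)) \<le> (cmod (x i))^2 + (cmod (y i))^2"
      by (simp add: norm_mult prod_le_sq)
  qed auto
  thus ?thesis by (rule abs_summable_summable)
qed

lemma inn_lin_left:
  assumes "is_l2 x" "is_l2 y" "is_l2 z"
  shows "l2_inner (\<lambda>i. a * x i + b * y i) z = a * l2_inner x z + b * l2_inner y z"
proof -
  have "l2_inner (\<lambda>i. a * x i + b * y i) z = infsum (\<lambda>i. a * (x i * cnj (z i)) + b * (y i * cnj (z i))) UNIV"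
    unfolding l2_inner_def by (simp add: algebra_simps)
  also have "\<dots> = infsum (\<lambda>i. a * (x i * cnj (z i))) UNIV + infsum (\<lambda>i. b * (y i * cnj (z i))) UNIV"
    by (intro infsum_add summable_on_cmult_right summable_prod assms)
  also have "\<dots> = a * l2_inner x z + b * l2_inner y z"
    unfolding l2_inner_def
    by (subst infsum_cmult_right, intro summable_prod assms, auto)+
  finally show ?thesis .
qed

lemma inn_conj: "l2_inner y x = cnj (l2_inner x y)"
  unfolding l2_inner_def infsum_cnj[symmetric] by (simp add: mult.commute)

lemma inn_lin_right:
  assumes "is_l2 x" "is_l2 y" "is_l2 z"
  shows "l2_inner z (\<lambda>i. a * x i + b * y i) = cnj a * l2_inner z x + cnj b * l2_inner z y"
  by (subst inn_conj, subst inn_lin_left[OF assms]) (simp add: inn_conj[of z])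

lemma infsum_of_real_nn:
  fixes g :: "'a \<Rightarrow> real"
  shows "infsum (\<lambda>i. complex_of_real (g i)) A = complex_of_real (infsum g A)"
proof (cases "g summable_on A")
  case True
  have "((\<lambda>i. complex_of_real (g i)) has_sum complex_of_real (infsum g A)) A"
    by (rule has_sum_bounded_linear[OF bounded_linear_of_real has_sum_infsum[OF True]])
  thus ?thesis by (rule infsumI)
next
  case False
  have "\<not> (\<lambda>i. complex_of_real (g i)) summable_on A"
  proof
    assume "(\<lambda>i. complex_of_real (g i)) summable_on A"
    from summable_on_Re[OF this] show False using False by simp
  qed
  thus ?thesis using False by (simp add: infsum_not_exists)
qed

lemma inn_self: "l2_inner x x = complex_of_real (l2_normsq x)"
proof -
  have "l2_inner x x = infsum (\<lambda>i. complex_of_real ((cmod (x i))^2)) UNIV"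
    unfolding l2_inner_def by (rule infsum_cong) (simp add: complex_norm_square[symmetric] del: of_real_power)
  also have "\<dots> = complex_of_real (l2_normsq x)"
    unfolding l2_normsq_def by (rule infsum_of_real_nn)
  finally show ?thesis .
qed



lemma nsq_Re: "l2_normsq x = Re (l2_inner x x)"
  by (simp add: inn_self)

lemma nsq_eq_0:
  assumes "is_l2 x" "l2_normsq x = 0"
  shows "x = (\<lambda>i. 0)"
proof
  fix i
  have "(cmod (x i))^2 = 0"
    using nonneg_infsum_le_0D[of "\<lambda>i. (cmod (x i))^2" UNIV i] assms
    unfolding is_l2_def l2_normsq_def by auto
  thus "x i = 0" by simp
qed

lemma coord_le:
  assumes "is_l2 x"
  shows "(cmod (x i))^2 \<le> l2_normsq x"
  using finite_sum_le_infsum[of "\<lambda>i. (cmod (x i))^2" UNIV "{i}"] assms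
  unfolding is_l2_def l2_normsq_def by auto

lemma coord_le_nrm:
  assumes "is_l2 x"
  shows "cmod (x i) \<le> nrm x"
  unfolding nrm_def using coord_le[OF assms, of i] real_le_rsqrt by blast

lemma nsq_scale:
  assumes "is_l2 x"
  shows "l2_normsq (\<lambda>i. a * x i) = (cmod a)^2 * l2_normsq x"
  unfolding l2_normsq_def
  using assms unfolding is_l2_def
  by (simp add: norm_mult power_mult_distrib infsum_cmult_right)

lemma nrm_scale:
  assumes "is_l2 x"
  shows "nrm (\<lambda>i. a * x i) = cmod a * nrm x"
  unfolding nrm_def nsq_scale[OF assms] by (simp add: real_sqrt_mult)

lemma inn_zero_right[simp]: "l2_inner x (\<lambda>i. 0) = 0"
  unfolding l2_inner_def by simp

lemma inn_zero_left[simp]: "l2_inner (\<lambda>i. 0) x = 0"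
  unfolding l2_inner_def by simp

lemma nsq_lin:
  assumes "is_l2 x" "is_l2 y"
  shows "l2_normsq (\<lambda>i. a * x i + b * y i) =
     (cmod a)^2 * l2_normsq x + (cmod b)^2 * l2_normsq y + 2 * Re (a * cnj b * l2_inner x y)"
proof -
  let ?z = "\<lambda>i. a * x i + b * y i"
  have z: "is_l2 ?z" using assms by (rule is_l2_lin)
  have "l2_inner ?z ?z = a * l2_inner x ?z + b * l2_inner y ?z"
    by (rule inn_lin_left[OF assms z])
  also have "\<dots> = a * (cnj a * l2_inner x x + cnj b * l2_inner x y)
      + b * (cnj a * l2_inner y x + cnj b * l2_inner y y)"
    by (simp add: inn_lin_right[OF assms] assms)
  finally have e: "l2_inner ?z ?z = a * (cnj a * l2_inner x x + cnj b * l2_inner x y)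
      + b * (cnj a * l2_inner y x + cnj b * l2_inner y y)" .
  have r1: "Re (a * (cnj a * l2_inner x x)) = (cmod a)^2 * l2_normsq x"
    by (simp add: inn_self mult.assoc[symmetric] complex_norm_square[symmetric] del: of_real_power)
  have r2: "Re (b * (cnj b * l2_inner y y)) = (cmod b)^2 * l2_normsq y"
    by (simp add: inn_self mult.assoc[symmetric] complex_norm_square[symmetric] del: of_real_power)
  have r3: "Re (b * (cnj a * l2_inner y x)) = Re (a * cnj b * l2_inner x y)"
  proof -
    have "b * (cnj a * l2_inner y x) = cnj (a * cnj b * l2_inner x y)"
      by (subst inn_conj[of y x]) (simp add: mult.commute mult.left_commute)
    hence "Re (b * (cnj a * l2_inner y x)) = Re (cnj (a * cnj b * l2_inner x y))" by (rule arg_cong)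
    thus ?thesis by (simp only: cnj.sel(1))
  qed
  show ?thesis
    unfolding nsq_Re[of ?z] e using r1 r2 r3 by (simp add: algebra_simps)
qed

lemma CS_sq:
  assumes "is_l2 x" "is_l2 y"
  shows "(cmod (l2_inner x y))^2 \<le> l2_normsq x * l2_normsq y"
proof (cases "l2_normsq y = 0")
  case True
  hence "y = (\<lambda>i. 0)" using nsq_eq_0 assms by blast
  thus ?thesis using True by simp
next
  case False
  hence ny: "l2_normsq y > 0" using nsq_nonneg[of y] by linarith
  define t where "t = l2_inner x y / complex_of_real (l2_normsq y)"
  have "0 \<le> l2_normsq (\<lambda>i. 1 * x i + (- t) * y i)" by (rule nsq_nonneg)
  also have "\<dots> = l2_normsq x + (cmod t)^2 * l2_normsq y - 2 * Re (cnj t * l2_inner x y)"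
    using nsq_lin[OF assms, of 1 "-t"] by simp
  also have "(cmod t)^2 * l2_normsq y = (cmod (l2_inner x y))^2 / l2_normsq y"
    unfolding t_def using ny by (simp add: norm_divide power_divide power2_eq_square)
  also have "Re (cnj t * l2_inner x y) = (cmod (l2_inner x y))^2 / l2_normsq y"
  proof -
    have "cnj t * l2_inner x y = complex_of_real ((cmod (l2_inner x y))^2 / l2_normsq y)"
      unfolding t_def using ny
      by (simp add: complex_norm_square mult.commute del: of_real_power)
    thus ?thesis by (metis Re_complex_of_real)
  qed
  finally have "(cmod (l2_inner x y))^2 / l2_normsq y \<le> l2_normsq x" by simp
  thus ?thesis using ny by (simp add: divide_le_eq mult.commute)
qed

lemma CS:
  assumes "is_l2 x" "is_l2 y"
  shows "cmod (l2_inner x y) \<le> nrm x * nrm y"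
proof -
  have "(cmod (l2_inner x y))^2 \<le> (nrm x * nrm y)^2"
    using CS_sq[OF assms] by (simp add: power_mult_distrib nrm_sq)
  thus ?thesis using nrm_nonneg[of x] nrm_nonneg[of y]
    by (meson mult_nonneg_nonneg power2_le_imp_le)
qed

lemma nrm_triangle:
  assumes "is_l2 x" "is_l2 y"
  shows "nrm (\<lambda>i. x i + y i) \<le> nrm x + nrm y"
proof -
  have "l2_normsq (\<lambda>i. x i + y i) = l2_normsq x + l2_normsq y + 2 * Re (l2_inner x y)"
    using nsq_lin[OF assms, of 1 1] by simp
  also have "Re (l2_inner x y) \<le> nrm x * nrm y"
    using CS[OF assms] complex_Re_le_cmod order_trans by blast
  hence "l2_normsq x + l2_normsq y + 2 * Re (l2_inner x y) \<le> (nrm x + nrm y)^2"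
    by (simp add: power2_sum nrm_sq)
  finally have "(nrm (\<lambda>i. x i + y i))^2 \<le> (nrm x + nrm y)^2" by (simp add: nrm_sq)
  thus ?thesis using nrm_nonneg[of x] nrm_nonneg[of y]
    by (meson add_nonneg_nonneg power2_le_imp_le)
qed

lemma is_l2_uminus: "is_l2 x \<Longrightarrow> is_l2 (\<lambda>i. - x i)"
  using is_l2_scale[of x "-1"] by simp

lemma nrm_diff_triangle:
  assumes "is_l2 x" "is_l2 y"
  shows "nrm (\<lambda>i. x i - y i) \<le> nrm x + nrm y"
proof -
  have "nrm (\<lambda>i. x i + (-1) * y i) \<le> nrm x + nrm (\<lambda>i. (-1) * y i)"
    by (rule nrm_triangle) (auto intro: assms is_l2_uminus)
  thus ?thesis using nrm_scale[OF assms(2), of "-1"] by simp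
qed

lemma parallelogram:
  assumes "is_l2 x" "is_l2 y"
  shows "l2_normsq (\<lambda>i. x i + y i) + l2_normsq (\<lambda>i. x i - y i) = 2 * l2_normsq x + 2 * l2_normsq y"
  using nsq_lin[OF assms, of 1 1] nsq_lin[OF assms, of 1 "-1"] by simp

lemma is_l2_ev[simp]: "is_l2 (ev i)"
  unfolding is_l2_def ev_def
  by (rule summable_on_cong_neutral[where S="{i}", THEN iffD1]) auto

lemma nsq_ev[simp]: "l2_normsq (ev i) = 1"
  unfolding l2_normsq_def ev_def
  by (subst infsum_cong_neutral[where T="{i}" and g="\<lambda>_. 1"]) auto

lemma inn_ev_right: "l2_inner x (ev i) = x i"
  unfolding l2_inner_def ev_def
  by (subst infsum_cong_neutral[where T="{i}" and g="\<lambda>_. x i"]) auto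

lemma inn_ev_left: "l2_inner (ev i) x = cnj (x i)"
  unfolding l2_inner_def ev_def
  by (subst infsum_cong_neutral[where T="{i}" and g="\<lambda>_. cnj (x i)"]) auto

lemma is_l2_trunc: "finite F \<Longrightarrow> is_l2 (trunc F x)"
  unfolding is_l2_def trunc_def
  by (rule summable_on_cong_neutral[where S="F", THEN iffD1]) auto

lemma inn_trunc_right: "finite F \<Longrightarrow> l2_inner z (trunc F x) = (\<Sum>i\<in>F. z i * cnj (x i))"
  unfolding l2_inner_def trunc_def
  by (subst infsum_cong_neutral[where T="F" and g="\<lambda>i. z i * cnj (x i)"]) auto

lemma inn_trunc_left: "finite F \<Longrightarrow> l2_inner (trunc F x) z = (\<Sum>i\<in>F. x i * cnj (z i))"
  unfolding l2_inner_def trunc_def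
  by (subst infsum_cong_neutral[where T="F" and g="\<lambda>i. x i * cnj (z i)"]) auto

lemma nsq_trunc: "finite F \<Longrightarrow> l2_normsq (trunc F x) = (\<Sum>i\<in>F. (cmod (x i))^2)"
  unfolding l2_normsq_def trunc_def
  by (subst infsum_cong_neutral[where T="F" and g="\<lambda>i. (cmod (x i))^2"]) auto

lemma nsq_rest:
  assumes "is_l2 x" "finite F"
  shows "l2_normsq (\<lambda>i. x i - trunc F x i) = l2_normsq x - (\<Sum>i\<in>F. (cmod (x i))^2)"
proof -
  have s1: "(\<lambda>i. if i \<in> F then (cmod (x i))^2 else 0) summable_on UNIV"
    by (rule summable_on_cong_neutral[where S="F", THEN iffD1]) (auto simp: assms)
  have s: "(\<lambda>i. (cmod (x i))^2) summable_on UNIV" using assms unfolding is_l2_def by simp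
  have s2: "(\<lambda>i. (cmod (x i))^2 - (if i \<in> F then (cmod (x i))^2 else 0)) summable_on UNIV"
    using summable_on_add[OF s summable_on_uminus[THEN iffD2, OF s1]] by simp
  have "l2_normsq x = infsum (\<lambda>i. (cmod (x i))^2 - (if i \<in> F then (cmod (x i))^2 else 0)
        + (if i \<in> F then (cmod (x i))^2 else 0)) UNIV"
    unfolding l2_normsq_def by simp
  also have "\<dots> = infsum (\<lambda>i. (cmod (x i))^2 - (if i \<in> F then (cmod (x i))^2 else 0)) UNIV
     + infsum (\<lambda>i. if i \<in> F then (cmod (x i))^2 else 0) UNIV"
    by (rule infsum_add[OF s2 s1])
  also have "infsum (\<lambda>i. if i \<in> F then (cmod (x i))^2 else 0) UNIV = (\<Sum>i\<in>F. (cmod (x i))^2)"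
    by (subst infsum_cong_neutral[where T="F" and g="\<lambda>i. (cmod (x i))^2"]) (auto simp: assms)
  also have "infsum (\<lambda>i. (cmod (x i))^2 - (if i \<in> F then (cmod (x i))^2 else 0)) UNIV
      = l2_normsq (\<lambda>i. x i - trunc F x i)"
    unfolding l2_normsq_def trunc_def by (rule infsum_cong) auto
  finally show ?thesis by simp
qed

lemma nsq_rest_tendsto:
  assumes "is_l2 x"
  shows "((\<lambda>F. l2_normsq (\<lambda>i. x i - trunc F x i)) \<longlongrightarrow> 0) (finite_subsets_at_top UNIV)"
proof -
  have t: "((\<lambda>F. \<Sum>i\<in>F. (cmod (x i))^2) \<longlongrightarrow> l2_normsq x) (finite_subsets_at_top UNIV)"
    unfolding l2_normsq_def using infsum_tendsto assms unfolding is_l2_def by blast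
  have "((\<lambda>F. l2_normsq x - (\<Sum>i\<in>F. (cmod (x i))^2)) \<longlongrightarrow> l2_normsq x - l2_normsq x) (finite_subsets_at_top UNIV)"
    by (intro tendsto_diff tendsto_const t)
  hence "((\<lambda>F. l2_normsq x - (\<Sum>i\<in>F. (cmod (x i))^2)) \<longlongrightarrow> 0) (finite_subsets_at_top UNIV)" by simp
  moreover have "eventually (\<lambda>F. l2_normsq x - (\<Sum>i\<in>F. (cmod (x i))^2) = l2_normsq (\<lambda>i. x i - trunc F x i)) (finite_subsets_at_top UNIV)"
    using nsq_rest[OF assms] by (auto simp: eventually_finite_subsets_at_top_weakI)
  ultimately show ?thesis by (rule Lim_transform_eventually)
qed

lemma nrm_rest_tendsto:
  assumes "is_l2 x"
  shows "((\<lambda>F. nrm (\<lambda>i. x i - trunc F x i)) \<longlongrightarrow> 0) (finite_subsets_at_top UNIV)"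
  unfolding nrm_def using tendsto_real_sqrt[OF nsq_rest_tendsto[OF assms]] by simp

lemma l2_of_finite_bound:
  assumes "\<And>F. finite F \<Longrightarrow> (\<Sum>i\<in>F. (cmod (y i))^2) \<le> K"
  shows "is_l2 y \<and> l2_normsq y \<le> K"
proof
  show "is_l2 y" unfolding is_l2_def
    by (rule nonneg_bdd_above_summable_on) (auto intro!: bdd_aboveI2 assms)
  thus "l2_normsq y \<le> K" unfolding l2_normsq_def is_l2_def
    by (intro infsum_le_finite_sums assms) auto
qed

lemma l2_of_finite_bound_sqrt:
  assumes "K \<ge> 0" "\<And>F. finite F \<Longrightarrow> (\<Sum>i\<in>F. (cmod (y i))^2) \<le> K * sqrt (\<Sum>i\<in>F. (cmod (y i))^2)"
  shows "is_l2 y \<and> l2_normsq y \<le> K^2"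
proof (rule l2_of_finite_bound)
  fix F :: "'a set" assume F: "finite F"
  define a where "a = (\<Sum>i\<in>F. (cmod (y i))^2)"
  have a0: "a \<ge> 0" unfolding a_def by (simp add: sum_nonneg)
  have "a \<le> K * sqrt a" using assms(2)[OF F] unfolding a_def .
  hence "sqrt a * sqrt a \<le> K * sqrt a" using a0 by simp
  hence "sqrt a \<le> K"
    by (metis a0 assms(1) mult_le_cancel_right mult_zero_left order_le_less real_sqrt_gt_0_iff real_sqrt_zero)
  hence "(sqrt a)^2 \<le> K^2" by (rule power_mono) (simp add: a0)
  thus "(\<Sum>i\<in>F. (cmod (y i))^2) \<le> K^2" using a0 unfolding a_def by simp
qed

lemma inn_diff_right:
  assumes "is_l2 x" "is_l2 y" "is_l2 z"
  shows "l2_inner z (\<lambda>i. x i - y i) = l2_inner z x - l2_inner z y"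
  using inn_lin_right[OF assms, of 1 "-1"] by simp

lemma inn_diff_left:
  assumes "is_l2 x" "is_l2 y" "is_l2 z"
  shows "l2_inner (\<lambda>i. x i - y i) z = l2_inner x z - l2_inner y z"
  using inn_lin_left[OF assms, of 1 "-1"] by simp

lemma lim_pattern:
  assumes a: "is_l2 a" and v: "is_l2 v"
    and eq: "\<And>F. finite F \<Longrightarrow> l2_inner a (trunc F v) = \<phi> (trunc F v)"
    and bd: "\<And>F. finite F \<Longrightarrow> cmod (\<phi> v - \<phi> (trunc F v)) \<le> K * nrm (\<lambda>i. v i - trunc F v i)"
  shows "l2_inner a v = \<phi> v"
proof -
  have le: "cmod (l2_inner a v - \<phi> v) \<le> (nrm a + K) * nrm (\<lambda>i. v i - trunc F v i)"
    if F: "finite F" for F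
  proof -
    have "l2_inner a v - \<phi> v = l2_inner a (\<lambda>i. v i - trunc F v i) - (\<phi> v - \<phi> (trunc F v))"
      using eq[OF F] inn_diff_right[OF v is_l2_trunc[OF F] a] by simp
    hence "cmod (l2_inner a v - \<phi> v) \<le> cmod (l2_inner a (\<lambda>i. v i - trunc F v i)) + cmod (\<phi> v - \<phi> (trunc F v))"
      by (metis norm_triangle_ineq4)
    also have "\<dots> \<le> nrm a * nrm (\<lambda>i. v i - trunc F v i) + K * nrm (\<lambda>i. v i - trunc F v i)"
      by (intro add_mono CS a is_l2_diff v is_l2_trunc F bd)
    finally show ?thesis by (simp add: algebra_simps)
  qed
  have "((\<lambda>F. (nrm a + K) * nrm (\<lambda>i. v i - trunc F v i)) \<longlongrightarrow> (nrm a + K) * 0) (finite_subsets_at_top UNIV)"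
    by (intro tendsto_mult tendsto_const nrm_rest_tendsto v)
  hence "((\<lambda>F. (nrm a + K) * nrm (\<lambda>i. v i - trunc F v i)) \<longlongrightarrow> 0) (finite_subsets_at_top UNIV)" by simp
  hence "cmod (l2_inner a v - \<phi> v) \<le> 0"
    by (rule tendsto_lowerbound[where a="cmod (l2_inner a v - \<phi> v)"])
       (auto intro!: eventually_finite_subsets_at_top_weakI le)
  thus ?thesis by simp
qed



lemma summable_on_finsum:
  fixes f :: "'b \<Rightarrow> 'a \<Rightarrow> 'c::{topological_comm_monoid_add}"
  assumes "finite F" "\<And>i. i \<in> F \<Longrightarrow> f i summable_on A"
  shows "(\<lambda>j. \<Sum>i\<in>F. f i j) summable_on A"
  using assms by (induction F rule: finite_induct) (auto intro: summable_on_add)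

lemma infsum_finsum:
  fixes f :: "'b \<Rightarrow> 'a \<Rightarrow> 'c::{topological_comm_monoid_add, t2_space}"
  assumes "finite F" "\<And>i. i \<in> F \<Longrightarrow> f i summable_on A"
  shows "infsum (\<lambda>j. \<Sum>i\<in>F. f i j) A = (\<Sum>i\<in>F. infsum (f i) A)"
  using assms
proof (induction F rule: finite_induct)
  case (insert x F)
  have "infsum (\<lambda>j. \<Sum>i\<in>insert x F. f i j) A = infsum (\<lambda>j. f x j + (\<Sum>i\<in>F. f i j)) A"
    using insert by simp
  also have "\<dots> = infsum (f x) A + infsum (\<lambda>j. \<Sum>i\<in>F. f i j) A"
    using insert by (intro infsum_add summable_on_finsum) auto
  finally show ?case using insert by simp
qed simp

lemma nrm_trunc_le:
  assumes "is_l2 w" "finite F"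
  shows "L2_set (\<lambda>i. cmod (w i)) F \<le> nrm w"
proof -
  have "(\<Sum>i\<in>F. (cmod (w i))^2) \<le> l2_normsq w"
    unfolding l2_normsq_def using assms unfolding is_l2_def
    by (intro finite_sum_le_infsum) auto
  thus ?thesis unfolding L2_set_def nrm_def by simp
qed

lemma series_bound:
  assumes l2: "\<And>n. is_l2 (w n)" and sm: "summable (\<lambda>n. nrm (w n))"
  shows "(\<forall>i. summable (\<lambda>n. w n i)) \<and> is_l2 (\<lambda>i. \<Sum>n. w n i) \<and> nrm (\<lambda>i. \<Sum>n. w n i) \<le> (\<Sum>n. nrm (w n))"
proof -
  define T where "T = (\<Sum>n. nrm (w n))"
  have T0: "T \<ge> 0" unfolding T_def by (intro suminf_nonneg sm nrm_nonneg)
  have pw: "summable (\<lambda>n. w n i)" for i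
    by (rule summable_comparison_test[OF _ sm]) (auto intro: coord_le_nrm l2)
  have fin: "(\<Sum>i\<in>F. (cmod (\<Sum>n. w n i))^2) \<le> T^2" if F: "finite F" for F
  proof -
    have pk: "L2_set (\<lambda>i. cmod (\<Sum>n<K. w n i)) F \<le> T" for K
    proof -
      have "L2_set (\<lambda>i. cmod (\<Sum>n<K. w n i)) F \<le> (\<Sum>n<K. L2_set (\<lambda>i. cmod (w n i)) F)"
      proof (induction K)
        case 0 thus ?case by (simp add: L2_set_def)
      next
        case (Suc K)
        have "L2_set (\<lambda>i. cmod (\<Sum>n<Suc K. w n i)) F \<le> L2_set (\<lambda>i. cmod (\<Sum>n<K. w n i) + cmod (w K i)) F"
          by (rule L2_set_mono) (auto intro: norm_triangle_ineq)
        also have "\<dots> \<le> L2_set (\<lambda>i. cmod (\<Sum>n<K. w n i)) F + L2_set (\<lambda>i. cmod (w K i)) F"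
          by (rule L2_set_triangle_ineq)
        also have "\<dots> \<le> (\<Sum>n<Suc K. L2_set (\<lambda>i. cmod (w n i)) F)"
          using Suc by simp
        finally show ?case .
      qed
      also have "\<dots> \<le> (\<Sum>n<K. nrm (w n))"
        by (intro sum_mono nrm_trunc_le l2 F)
      also have "\<dots> \<le> T" unfolding T_def
        by (intro sum_le_suminf sm) (auto intro: nrm_nonneg)
      finally show ?thesis .
    qed
    have lim: "(\<lambda>K. L2_set (\<lambda>i. cmod (\<Sum>n<K. w n i)) F) \<longlonglongrightarrow> L2_set (\<lambda>i. cmod (\<Sum>n. w n i)) F"
      unfolding L2_set_def
      by (intro tendsto_intros summable_LIMSEQ pw)
    have "L2_set (\<lambda>i. cmod (\<Sum>n. w n i)) F \<le> T"
      by (rule LIMSEQ_le_const2[OF lim]) (auto intro: pk)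
    hence "(L2_set (\<lambda>i. cmod (\<Sum>n. w n i)) F)^2 \<le> T^2"
      by (intro power_mono) auto
    thus ?thesis unfolding L2_set_def by (simp add: sum_nonneg)
  qed
  have "is_l2 (\<lambda>i. \<Sum>n. w n i) \<and> l2_normsq (\<lambda>i. \<Sum>n. w n i) \<le> T^2"
    by (rule l2_of_finite_bound) (rule fin)
  moreover hence "nrm (\<lambda>i. \<Sum>n. w n i) \<le> T"
    unfolding nrm_def using T0 real_le_lsqrt by blast
  ultimately show ?thesis using pw unfolding T_def by blast
qed

lemma series_l2:
  assumes l2: "\<And>n. is_l2 (v n)" and sm: "summable (\<lambda>n. nrm (v n))"
  shows "(\<forall>i. summable (\<lambda>n. v n i)) \<and> is_l2 (\<lambda>i. \<Sum>n. v n i) \<and>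
     (\<forall>N. is_l2 (\<lambda>i. (\<Sum>n. v n i) - (\<Sum>n<N. v n i)) \<and>
          nrm (\<lambda>i. (\<Sum>n. v n i) - (\<Sum>n<N. v n i)) \<le> (\<Sum>n. nrm (v (n + N))))"
proof -
  have A: "(\<forall>i. summable (\<lambda>n. v n i)) \<and> is_l2 (\<lambda>i. \<Sum>n. v n i)"
    using series_bound[OF l2 sm] by blast
  have B: "is_l2 (\<lambda>i. (\<Sum>n. v n i) - (\<Sum>n<N. v n i)) \<and>
          nrm (\<lambda>i. (\<Sum>n. v n i) - (\<Sum>n<N. v n i)) \<le> (\<Sum>n. nrm (v (n + N)))" for N
  proof -
    have eq: "(\<lambda>i. (\<Sum>n. v n i) - (\<Sum>n<N. v n i)) = (\<lambda>i. \<Sum>n. v (n + N) i)"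
    proof
      fix i
      show "(\<Sum>n. v n i) - (\<Sum>n<N. v n i) = (\<Sum>n. v (n + N) i)"
        using suminf_split_initial_segment[of "\<lambda>n. v n i" N] A by simp
    qed
    show ?thesis unfolding eq
      using series_bound[of "\<lambda>n. v (n + N)"] l2 summable_ignore_initial_segment[OF sm, of N] by blast
  qed
  show ?thesis using A B by blast
qed



lemma bop_l2: "bounded_op T \<Longrightarrow> is_l2 x \<Longrightarrow> is_l2 (T x)"
  unfolding bounded_op_def by blast

lemma bop_lin: "bounded_op T \<Longrightarrow> is_l2 x \<Longrightarrow> is_l2 y \<Longrightarrow>
   T (\<lambda>i. a * x i + b * y i) = (\<lambda>i. a * T x i + b * T y i)"
  unfolding bounded_op_def by blast

lemma bop_bound:
  assumes "bounded_op T"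
  obtains C where "C \<ge> 0" "\<And>x. is_l2 x \<Longrightarrow> nrm (T x) \<le> C * nrm x"
proof -
  obtain C0 where C0: "\<And>x. is_l2 x \<Longrightarrow> l2_normsq (T x) \<le> C0 * l2_normsq x"
    using assms unfolding bounded_op_def by blast
  have "nrm (T x) \<le> sqrt (max C0 0) * nrm x" if "is_l2 x" for x
  proof -
    have "l2_normsq (T x) \<le> max C0 0 * l2_normsq x"
      using C0[OF that] nsq_nonneg[of x]
      by (meson max.cobounded1 mult_right_mono order_trans)
    hence "sqrt (l2_normsq (T x)) \<le> sqrt (max C0 0 * l2_normsq x)"
      by (rule real_sqrt_le_mono)
    thus ?thesis unfolding nrm_def by (simp add: real_sqrt_mult)
  qed
  thus ?thesis using that[of "sqrt (max C0 0)"] by simp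
qed

lemma bop_intro:
  assumes "\<And>x. is_l2 x \<Longrightarrow> is_l2 (T x)"
    and "\<And>x y a b. is_l2 x \<Longrightarrow> is_l2 y \<Longrightarrow> T (\<lambda>i. a * x i + b * y i) = (\<lambda>i. a * T x i + b * T y i)"
    and "\<And>x. is_l2 x \<Longrightarrow> nrm (T x) \<le> C * nrm x"
  shows "bounded_op T"
  unfolding bounded_op_def
proof (intro conjI allI impI exI)
  fix x :: "'a \<Rightarrow> complex" assume x: "is_l2 x"
  have "(nrm (T x))^2 \<le> (C * nrm x)^2"
    using assms(3)[OF x] by (intro power_mono) (auto intro: nrm_nonneg)
  thus "l2_normsq (T x) \<le> C^2 * l2_normsq x" by (simp add: nrm_sq power_mult_distrib)
qed (use assms in auto)

lemma bop_zero: "bounded_op T \<Longrightarrow> T (\<lambda>i. 0) = (\<lambda>i. 0)"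
  using bop_lin[of T "\<lambda>i. 0" "\<lambda>i. 0" 0 0] by simp

lemma bop_add: "bounded_op T \<Longrightarrow> is_l2 x \<Longrightarrow> is_l2 y \<Longrightarrow> T (\<lambda>i. x i + y i) = (\<lambda>i. T x i + T y i)"
  using bop_lin[of T x y 1 1] by simp

lemma bop_diff: "bounded_op T \<Longrightarrow> is_l2 x \<Longrightarrow> is_l2 y \<Longrightarrow> T (\<lambda>i. x i - y i) = (\<lambda>i. T x i - T y i)"
  using bop_lin[of T x y 1 "-1"] by simp

lemma bop_scale: "bounded_op T \<Longrightarrow> is_l2 x \<Longrightarrow> T (\<lambda>i. a * x i) = (\<lambda>i. a * T x i)"
  using bop_lin[of T x x a 0] by simp

lemma bop_sum:
  assumes "bounded_op T" "finite K" "\<And>k. k \<in> K \<Longrightarrow> is_l2 (x k)"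
  shows "T (\<lambda>i. \<Sum>k\<in>K. x k i) = (\<lambda>i'. \<Sum>k\<in>K. T (x k) i')"
  using assms(2,3)
proof (induction K rule: finite_induct)
  case empty thus ?case using bop_zero[OF assms(1)] by simp
next
  case (insert k K)
  have l: "is_l2 (x k)" "is_l2 (\<lambda>i. \<Sum>k\<in>K. x k i)" using insert.prems by (auto intro: is_l2_sum insert.hyps)
  have IH: "T (\<lambda>i. \<Sum>k\<in>K. x k i) = (\<lambda>i'. \<Sum>k\<in>K. T (x k) i')"
    using insert.IH insert.prems by blast
  have e1: "(\<lambda>i. \<Sum>k\<in>insert k K. x k i) = (\<lambda>i. x k i + (\<Sum>k\<in>K. x k i))"
    using insert.hyps by (simp add: sum.insert)
  have e2: "(\<lambda>i'. \<Sum>k\<in>insert k K. T (x k) i') = (\<lambda>i'. T (x k) i' + (\<Sum>k\<in>K. T (x k) i'))"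
    using insert.hyps by (simp add: sum.insert)
  show ?case unfolding e1 e2 bop_add[OF assms(1) l] IH ..
qed

lemma bop_comp:
  fixes S :: "('b \<Rightarrow> complex) \<Rightarrow> ('c \<Rightarrow> complex)" and T :: "('a \<Rightarrow> complex) \<Rightarrow> ('b \<Rightarrow> complex)"
  assumes "bounded_op S" "bounded_op T"
  shows "bounded_op (\<lambda>x. S (T x))"
proof -
  obtain C1 where C1: "C1 \<ge> 0" "\<And>x. is_l2 x \<Longrightarrow> nrm (S x) \<le> C1 * nrm x" using bop_bound[OF assms(1)] by blast
  obtain C2 where C2: "C2 \<ge> 0" "\<And>x. is_l2 x \<Longrightarrow> nrm (T x) \<le> C2 * nrm x" using bop_bound[OF assms(2)] by blast
  show ?thesis
  proof (rule bop_intro[where C="C1 * C2"])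
    fix x :: "'a \<Rightarrow> complex" assume x: "is_l2 x"
    have Tx: "is_l2 (T x)" by (rule bop_l2[OF assms(2) x])
    show "is_l2 (S (T x))" by (rule bop_l2[OF assms(1) Tx])
    have "nrm (S (T x)) \<le> C1 * nrm (T x)" by (rule C1(2)[OF Tx])
    also have "\<dots> \<le> C1 * (C2 * nrm x)" by (rule mult_left_mono[OF C2(2)[OF x] C1(1)])
    finally show "nrm (S (T x)) \<le> C1 * C2 * nrm x" by (simp add: mult.assoc)
  next
    fix x y :: "'a \<Rightarrow> complex" and a b assume "is_l2 x" "is_l2 y"
    hence l: "is_l2 (T x)" "is_l2 (T y)" by (auto intro: bop_l2[OF assms(2)])
    have "T (\<lambda>i. a * x i + b * y i) = (\<lambda>i. a * T x i + b * T y i)"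
      by (rule bop_lin[OF assms(2)]) fact+
    thus "S (T (\<lambda>i. a * x i + b * y i)) = (\<lambda>i. a * S (T x) i + b * S (T y) i)"
      using bop_lin[OF assms(1) l] by simp
  qed
qed

lemma bop_series:
  assumes T: "bounded_op T" and l2: "\<And>n. is_l2 (v n)" and sm: "summable (\<lambda>n. nrm (v n))"
  shows "(\<lambda>n. T (v n) i) sums (T (\<lambda>i. \<Sum>n. v n i) i)"
proof -
  obtain C where C: "C \<ge> 0" "\<And>x. is_l2 x \<Longrightarrow> nrm (T x) \<le> C * nrm x" using bop_bound[OF T] by blast
  note S = series_l2[OF l2 sm]
  let ?s = "\<lambda>i. \<Sum>n. v n i"
  have "(\<lambda>N. T ?s i - (\<Sum>n<N. T (v n) i)) \<longlonglongrightarrow> 0"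
  proof (rule Lim_null_comparison)
    show "\<forall>\<^sub>F N in sequentially. norm (T ?s i - (\<Sum>n<N. T (v n) i)) \<le> C * (\<Sum>n. nrm (v (n + N)))"
    proof (rule always_eventually, rule allI)
      fix N
      have "T ?s i - (\<Sum>n<N. T (v n) i) = T (\<lambda>i. ?s i - (\<Sum>n<N. v n i)) i"
        using bop_diff[OF T, of ?s "\<lambda>i. \<Sum>n<N. v n i"] bop_sum[OF T, of "{..<N}" v] S l2
        by (simp add: is_l2_sum)
      also have "norm \<dots> \<le> nrm (T (\<lambda>i. ?s i - (\<Sum>n<N. v n i)))"
        by (intro coord_le_nrm bop_l2[OF T]) (use S in blast)
      also have "\<dots> \<le> C * nrm (\<lambda>i. ?s i - (\<Sum>n<N. v n i))"
        by (intro C) (use S in blast)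
      also have "\<dots> \<le> C * (\<Sum>n. nrm (v (n + N)))"
        by (intro mult_left_mono C) (use S in blast)
      finally show "norm (T ?s i - (\<Sum>n<N. T (v n) i)) \<le> C * (\<Sum>n. nrm (v (n + N)))" .
    qed
    show "(\<lambda>N. C * (\<Sum>n. nrm (v (n + N)))) \<longlonglongrightarrow> 0"
      using tendsto_mult[OF tendsto_const suminf_exist_split2[OF sm], of C] by simp
  qed
  hence "(\<lambda>N. T ?s i - (T ?s i - (\<Sum>n<N. T (v n) i))) \<longlonglongrightarrow> T ?s i - 0"
    by (intro tendsto_diff tendsto_const)
  thus ?thesis unfolding sums_def by simp
qed



lemma inn_add_add:
  assumes "is_l2 a" "is_l2 b" "is_l2 c" "is_l2 d"
  shows "l2_inner (\<lambda>i. a i + b i) (\<lambda>i. c i + d i) =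
    l2_inner a c + l2_inner a d + l2_inner b c + l2_inner b d"
  using inn_lin_left[OF assms(1,2) is_l2_add[OF assms(3,4)], of 1 1]
    inn_lin_right[OF assms(3,4) assms(1), of 1 1] inn_lin_right[OF assms(3,4) assms(2), of 1 1]
  by simp

lemma inn_diff_diff:
  assumes "is_l2 a" "is_l2 b" "is_l2 c" "is_l2 d"
  shows "l2_inner (\<lambda>i. a i - b i) (\<lambda>i. c i - d i) =
    l2_inner a c - l2_inner a d - l2_inner b c + l2_inner b d"
  using inn_lin_left[OF assms(1,2) is_l2_diff[OF assms(3,4)], of 1 "-1"]
    inn_lin_right[OF assms(3,4) assms(1), of 1 "-1"] inn_lin_right[OF assms(3,4) assms(2), of 1 "-1"]
  by simp

lemma self_adj_norm_bound:
  fixes M :: "('i \<Rightarrow> complex) \<Rightarrow> ('i \<Rightarrow> complex)"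
  assumes bop: "bounded_op M"
    and sa: "\<And>x y. is_l2 x \<Longrightarrow> is_l2 y \<Longrightarrow> l2_inner (M x) y = l2_inner x (M y)"
    and qf: "\<And>x. is_l2 x \<Longrightarrow> \<bar>Re (l2_inner (M x) x)\<bar> \<le> q * l2_normsq x"
    and x: "is_l2 x"
  shows "nrm (M x) \<le> q * nrm x"
proof (cases "nrm x = 0")
  case True
  hence "x = (\<lambda>i. 0)" using nsq_eq_0[OF x] nrm_sq[of x] by simp
  thus ?thesis using bop_zero[OF bop] by (simp add: nrm_def)
next
  case False
  hence nx: "nrm x > 0" using nrm_nonneg[of x] by linarith
  have Mx: "is_l2 (M x)" by (rule bop_l2[OF bop x])
  show ?thesis
  proof (cases "nrm (M x) = 0")
    case True
    have "0 \<le> q * l2_normsq x" using qf[OF x] by linarith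
    moreover have "l2_normsq x > 0" using nx by (simp add: nrm_sq[symmetric])
    ultimately have "q \<ge> 0" by (auto simp: zero_le_mult_iff)
    thus ?thesis using True nx by simp
  next
    case False
    hence nMx: "nrm (M x) > 0" using nrm_nonneg[of "M x"] by linarith
    define t where "t = nrm x / nrm (M x)"
    define y where "y = (\<lambda>i. complex_of_real t * M x i)"
    have y: "is_l2 y" unfolding y_def by (rule is_l2_scale[OF Mx])
    have My: "is_l2 (M y)" by (rule bop_l2[OF bop y])
    have Mp: "M (\<lambda>i. x i + y i) = (\<lambda>i. M x i + M y i)" by (rule bop_add[OF bop x y])
    have Mm: "M (\<lambda>i. x i - y i) = (\<lambda>i. M x i - M y i)" by (rule bop_diff[OF bop x y])
    have e1: "l2_inner (M y) x = cnj (l2_inner (M x) y)"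
      using sa[OF y x] inn_conj[of "M x" y] by simp
    have key: "Re (l2_inner (M (\<lambda>i. x i + y i)) (\<lambda>i. x i + y i))
        - Re (l2_inner (M (\<lambda>i. x i - y i)) (\<lambda>i. x i - y i)) = 4 * Re (l2_inner (M x) y)"
      unfolding Mp Mm inn_add_add[OF Mx My x y] inn_diff_diff[OF Mx My x y] e1 by simp
    have A1: "Re (l2_inner (M (\<lambda>i. x i + y i)) (\<lambda>i. x i + y i)) \<le> q * l2_normsq (\<lambda>i. x i + y i)"
      using qf[OF is_l2_add[OF x y]] by linarith
    have A2: "- Re (l2_inner (M (\<lambda>i. x i - y i)) (\<lambda>i. x i - y i)) \<le> q * l2_normsq (\<lambda>i. x i - y i)"
      using qf[OF is_l2_diff[OF x y]] by linarith
    have "4 * Re (l2_inner (M x) y) \<le> q * (2 * l2_normsq x + 2 * l2_normsq y)"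
    proof -
      have "q * l2_normsq (\<lambda>i. x i + y i) + q * l2_normsq (\<lambda>i. x i - y i) = q * (2 * l2_normsq x + 2 * l2_normsq y)"
        using parallelogram[OF x y] by (metis distrib_left)
      thus ?thesis using key A1 A2 by linarith
    qed
    moreover have "Re (l2_inner (M x) y) = nrm x * nrm (M x)"
    proof -
      have "l2_inner (M x) y = complex_of_real t * l2_inner (M x) (M x)"
        unfolding y_def using inn_lin_right[OF Mx Mx Mx, of "complex_of_real t" 0] by simp
      hence "Re (l2_inner (M x) y) = t * l2_normsq (M x)" by (simp add: inn_self)
      thus ?thesis unfolding t_def using nMx by (simp add: nrm_sq[symmetric] power2_eq_square)
    qed
    moreover have "l2_normsq y = l2_normsq x"
      unfolding y_def nsq_scale[OF Mx] t_def using nMx nrm_nonneg[of x]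
      by (simp add: nrm_sq[symmetric] power_divide norm_divide abs_of_nonneg)
    ultimately have "4 * (nrm x * nrm (M x)) \<le> q * (4 * (nrm x * nrm x))"
      by (simp add: nrm_sq[symmetric] power2_eq_square)
    hence "nrm x * nrm (M x) \<le> nrm x * (q * nrm x)" by (simp add: algebra_simps)
    thus ?thesis using nx by simp
  qed
qed

lemma bop_id: "bounded_op (\<lambda>x. x)"
  by (rule bop_intro[where C=1]) auto

lemma bop_funpow:
  fixes M :: "('i \<Rightarrow> complex) \<Rightarrow> ('i \<Rightarrow> complex)"
  assumes "bounded_op M"
  shows "bounded_op (M ^^ n)"
proof (induction n)
  case 0 thus ?case using bop_id by (simp add: id_def)
next
  case (Suc n)
  have "bounded_op (\<lambda>x. M ((M ^^ n) x))" by (rule bop_comp[OF assms Suc])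
  thus ?case by (simp add: comp_def)
qed

lemma funpow_nrm:
  fixes M :: "('i \<Rightarrow> complex) \<Rightarrow> ('i \<Rightarrow> complex)"
  assumes "bounded_op M" "\<And>x. is_l2 x \<Longrightarrow> nrm (M x) \<le> q * nrm x" "q \<ge> 0" "is_l2 x"
  shows "nrm ((M ^^ n) x) \<le> q^n * nrm x"
proof (induction n)
  case 0 thus ?case by simp
next
  case (Suc n)
  have "nrm ((M ^^ Suc n) x) = nrm (M ((M ^^ n) x))" by simp
  also have "\<dots> \<le> q * nrm ((M ^^ n) x)"
    by (intro assms(2) bop_l2[OF bop_funpow[OF assms(1)] assms(4)])
  also have "\<dots> \<le> q * (q^n * nrm x)" by (intro mult_left_mono Suc assms(3))
  finally show ?case by simp
qed



lemma neumann:
  fixes S :: "('i \<Rightarrow> complex) \<Rightarrow> ('i \<Rightarrow> complex)"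
  assumes bop: "bounded_op S"
    and sa: "\<And>x y. is_l2 x \<Longrightarrow> is_l2 y \<Longrightarrow> l2_inner (S x) y = l2_inner x (S y)"
    and lb: "\<And>x. is_l2 x \<Longrightarrow> A * l2_normsq x \<le> Re (l2_inner (S x) x)"
    and ub: "\<And>x. is_l2 x \<Longrightarrow> Re (l2_inner (S x) x) \<le> B * l2_normsq x"
    and A: "A > 0"
  shows "\<exists>Si. bounded_op Si \<and> (\<forall>x. is_l2 x \<longrightarrow> Si (S x) = x \<and> S (Si x) = x)"
proof -
  have AB: "A \<le> B" using lb[of "ev undefined"] ub[of "ev undefined"] by simp
  define c where "c = 2 / (A + B)"
  define q where "q = (B - A) / (A + B)"
  have c0: "c > 0" unfolding c_def using A AB by simp
  have q0: "q \<ge> 0" unfolding q_def using A AB by simp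
  have q1: "q < 1" unfolding q_def using A AB by (simp add: divide_less_eq)
  have cq1: "1 - c * A = q" unfolding c_def q_def using A AB by (simp add: field_simps)
  have cq2: "1 - c * B = - q" unfolding c_def q_def using A AB by (simp add: field_simps)
  obtain CS where CS: "CS \<ge> 0" "\<And>x. is_l2 x \<Longrightarrow> nrm (S x) \<le> CS * nrm x" using bop_bound[OF bop] by blast
  define M where "M = (\<lambda>x. (\<lambda>i. x i - complex_of_real c * S x i))"
  have Ml2: "is_l2 (M x)" if "is_l2 x" for x
    unfolding M_def using that by (intro is_l2_diff is_l2_scale bop_l2[OF bop])
  have Mbop: "bounded_op M"
  proof (rule bop_intro[where C="1 + c * CS"])
    fix x :: "'i \<Rightarrow> complex" assume x: "is_l2 x"
    show "is_l2 (M x)" by (rule Ml2[OF x])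
    have "nrm (M x) \<le> nrm x + nrm (\<lambda>i. complex_of_real c * S x i)"
      unfolding M_def by (intro nrm_diff_triangle x is_l2_scale bop_l2[OF bop])
    also have "nrm (\<lambda>i. complex_of_real c * S x i) = c * nrm (S x)"
      using nrm_scale[OF bop_l2[OF bop x], of "complex_of_real c"] c0 by simp
    also have "c * nrm (S x) \<le> c * (CS * nrm x)" using CS(2)[OF x] c0 by simp
    finally show "nrm (M x) \<le> (1 + c * CS) * nrm x" by (simp add: algebra_simps)
  next
    fix x y :: "'i \<Rightarrow> complex" and a b assume x: "is_l2 x" and y: "is_l2 y"
    show "M (\<lambda>i. a * x i + b * y i) = (\<lambda>i. a * M x i + b * M y i)"
      unfolding M_def bop_lin[OF bop x y] by (auto simp: algebra_simps)
  qed
  have Msa: "l2_inner (M x) y = l2_inner x (M y)" if x: "is_l2 x" and y: "is_l2 y" for x y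
  proof -
    have "l2_inner (M x) y = l2_inner x y - complex_of_real c * l2_inner (S x) y"
      unfolding M_def using inn_lin_left[OF x bop_l2[OF bop x] y, of 1 "- complex_of_real c"] by simp
    moreover have "l2_inner x (M y) = l2_inner x y - complex_of_real c * l2_inner x (S y)"
      unfolding M_def using inn_lin_right[OF y bop_l2[OF bop y] x, of 1 "- complex_of_real c"] by simp
    ultimately show ?thesis using sa[OF x y] by simp
  qed
  have Mqf: "\<bar>Re (l2_inner (M x) x)\<bar> \<le> q * l2_normsq x" if x: "is_l2 x" for x
  proof -
    have "l2_inner (M x) x = l2_inner x x - complex_of_real c * l2_inner (S x) x"
      unfolding M_def using inn_lin_left[OF x bop_l2[OF bop x] x, of 1 "- complex_of_real c"] by simp
    hence e: "Re (l2_inner (M x) x) = l2_normsq x - c * Re (l2_inner (S x) x)"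
      by (simp add: inn_self)
    have "c * (A * l2_normsq x) \<le> c * Re (l2_inner (S x) x)" using lb[OF x] c0 by simp
    moreover have "c * Re (l2_inner (S x) x) \<le> c * (B * l2_normsq x)" using ub[OF x] c0 by simp
    ultimately have "(1 - c * B) * l2_normsq x \<le> Re (l2_inner (M x) x) \<and> Re (l2_inner (M x) x) \<le> (1 - c * A) * l2_normsq x"
      unfolding e by (simp add: algebra_simps)
    thus ?thesis unfolding cq1 cq2 by (simp add: abs_le_iff)
  qed
  have Mn: "nrm (M x) \<le> q * nrm x" if "is_l2 x" for x
    by (rule self_adj_norm_bound[OF Mbop Msa Mqf that])
  have Pbop: "bounded_op (M ^^ n)" for n by (rule bop_funpow[OF Mbop])
  have Pn: "nrm ((M ^^ n) x) \<le> q^n * nrm x" if "is_l2 x" for x n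
    by (rule funpow_nrm[OF Mbop Mn q0 that])
  have Pl2: "is_l2 ((M ^^ n) x)" if "is_l2 x" for x n by (rule bop_l2[OF Pbop that])
  have Psum: "summable (\<lambda>n. nrm ((M ^^ n) x))" if "is_l2 x" for x
    by (rule summable_comparison_test[where g="\<lambda>n. q^n * nrm x"])
       (auto intro!: summable_mult2 summable_geometric simp: q0 q1 Pn that nrm_nonneg)
  have Psum_le: "(\<Sum>n. nrm ((M ^^ n) x)) \<le> nrm x / (1 - q)" if x: "is_l2 x" for x
  proof -
    have "(\<Sum>n. nrm ((M ^^ n) x)) \<le> (\<Sum>n. q^n * nrm x)"
      by (intro suminf_le Psum x summable_mult2 summable_geometric) (auto simp: q0 q1 Pn x)
    also have "\<dots> = nrm x / (1 - q)"
      using suminf_mult2[OF summable_geometric[of q], of "nrm x"] suminf_geometric[of q] q0 q1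
      by (simp add: mult.commute)
    finally show ?thesis .
  qed
  have Pto0: "(\<lambda>n. (M ^^ n) x i) \<longlonglongrightarrow> 0" if x: "is_l2 x" for x i
  proof (rule Lim_null_comparison)
    show "\<forall>\<^sub>F n in sequentially. norm ((M ^^ n) x i) \<le> q^n * nrm x"
      using coord_le_nrm[OF Pl2[OF x]] Pn[OF x] order_trans by (intro always_eventually) blast
    show "(\<lambda>n. q^n * nrm x) \<longlonglongrightarrow> 0"
      using tendsto_mult[OF LIMSEQ_power_zero[of q] tendsto_const, of "nrm x"] q0 q1 by simp
  qed
  have Plin: "(M ^^ n) (\<lambda>i. a * x i + b * y i) = (\<lambda>i. a * (M ^^ n) x i + b * (M ^^ n) y i)"
    if "is_l2 x" "is_l2 y" for x y a b n
    by (rule bop_lin[OF Pbop that])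
  have pws: "summable (\<lambda>n. (M ^^ n) x i)" if "is_l2 x" for x i
    using series_l2[OF Pl2[OF that] Psum[OF that]] by blast
  define Si where "Si = (\<lambda>y. (\<lambda>i. complex_of_real c * (\<Sum>n. (M ^^ n) y i)))"
  have Sil2: "is_l2 (Si y)" if "is_l2 y" for y
    unfolding Si_def using series_l2[OF Pl2[OF that] Psum[OF that]] by (intro is_l2_scale) blast
  have Sibop: "bounded_op Si"
  proof (rule bop_intro[where C="c / (1 - q)"])
    fix y :: "'i \<Rightarrow> complex" assume y: "is_l2 y"
    show "is_l2 (Si y)" by (rule Sil2[OF y])
    have l: "is_l2 (\<lambda>i. \<Sum>n. (M ^^ n) y i)"
      using series_l2[OF Pl2[OF y] Psum[OF y]] by blast
    have "nrm (Si y) = c * nrm (\<lambda>i. \<Sum>n. (M ^^ n) y i)"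
      unfolding Si_def using nrm_scale[OF l, of "complex_of_real c"] c0 by simp
    also have "\<dots> \<le> c * (\<Sum>n. nrm ((M ^^ n) y))"
      using series_bound[OF Pl2[OF y] Psum[OF y]] c0 by (intro mult_left_mono) auto
    also have "\<dots> \<le> c * (nrm y / (1 - q))" using Psum_le[OF y] c0 by (intro mult_left_mono) auto
    finally show "nrm (Si y) \<le> c / (1 - q) * nrm y" by simp
  next
    fix x y :: "'i \<Rightarrow> complex" and a b assume x: "is_l2 x" and y: "is_l2 y"
    show "Si (\<lambda>i. a * x i + b * y i) = (\<lambda>i. a * Si x i + b * Si y i)"
    proof
      fix i
      have "(\<Sum>n. (M ^^ n) (\<lambda>i. a * x i + b * y i) i) = (\<Sum>n. a * (M ^^ n) x i + b * (M ^^ n) y i)"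
        unfolding Plin[OF x y] ..
      also have "\<dots> = a * (\<Sum>n. (M ^^ n) x i) + b * (\<Sum>n. (M ^^ n) y i)"
        using pws[OF x, of i] pws[OF y, of i]
        by (simp add: suminf_add[symmetric] suminf_mult summable_mult)
      finally show "Si (\<lambda>i. a * x i + b * y i) i = a * Si x i + b * Si y i"
        unfolding Si_def by (simp add: algebra_simps)
    qed
  qed
  have MS: "complex_of_real c * S x i = x i - M x i" for x i unfolding M_def by simp
  have left: "Si (S x) = x" if x: "is_l2 x" for x
  proof
    fix i
    have Sx: "is_l2 (S x)" by (rule bop_l2[OF bop x])
    have e: "complex_of_real c * (M ^^ n) (S x) i = (M ^^ n) x i - (M ^^ Suc n) x i" for n
    proof -
      have "complex_of_real c * (M ^^ n) (S x) i = (M ^^ n) (\<lambda>i. complex_of_real c * S x i) i"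
        using bop_scale[OF Pbop Sx, of n "complex_of_real c"] by simp
      also have "(\<lambda>i. complex_of_real c * S x i) = (\<lambda>i. x i - M x i)" using MS by simp
      also have "(M ^^ n) (\<lambda>i. x i - M x i) i = (M ^^ n) x i - (M ^^ n) (M x) i"
        using bop_diff[OF Pbop x Ml2[OF x], of n] by simp
      also have "(M ^^ n) (M x) = (M ^^ Suc n) x" by (simp add: funpow_swap1)
      finally show ?thesis .
    qed
    have "(\<lambda>n. (M ^^ n) x i - (M ^^ Suc n) x i) sums ((M ^^ 0) x i - 0)"
      by (rule telescope_sums'[OF Pto0[OF x]])
    hence "(\<lambda>n. complex_of_real c * (M ^^ n) (S x) i) sums x i" unfolding e by simp
    hence "(\<Sum>n. complex_of_real c * (M ^^ n) (S x) i) = x i" by (rule sums_unique[symmetric])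
    thus "Si (S x) i = x i" unfolding Si_def using pws[OF Sx, of i] by (simp add: suminf_mult)
  qed
  have right: "S (Si y) = y" if y: "is_l2 y" for y
  proof
    fix i
    let ?s = "\<lambda>i. \<Sum>n. (M ^^ n) y i"
    have s: "is_l2 ?s" using series_l2[OF Pl2[OF y] Psum[OF y]] by blast
    have "S (Si y) = (\<lambda>i. complex_of_real c * S ?s i)"
      unfolding Si_def by (rule bop_scale[OF bop s])
    have sm: "(\<lambda>n. S ((M ^^ n) y) i) sums (S ?s i)"
      by (rule bop_series[OF bop Pl2[OF y] Psum[OF y]])
    have e: "complex_of_real c * S ((M ^^ n) y) i = (M ^^ n) y i - (M ^^ Suc n) y i" for n
      using MS[of "(M ^^ n) y" i] by simp
    have "(\<lambda>n. complex_of_real c * S ((M ^^ n) y) i) sums (complex_of_real c * S ?s i)"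
      by (rule sums_mult[OF sm])
    moreover have "(\<lambda>n. (M ^^ n) y i - (M ^^ Suc n) y i) sums ((M ^^ 0) y i - 0)"
      by (rule telescope_sums'[OF Pto0[OF y]])
    ultimately have "complex_of_real c * S ?s i = y i" unfolding e using sums_unique2 by fastforce
    thus "S (Si y) i = y i" unfolding Si_def using bop_scale[OF bop s, of "complex_of_real c"] by simp
  qed
  show ?thesis using Sibop left right by blast
qed



definition An :: "('j \<Rightarrow> 'i \<Rightarrow> complex) \<Rightarrow> ('i \<Rightarrow> complex) \<Rightarrow> ('j \<Rightarrow> complex)" where
  "An g x = (\<lambda>j. l2_inner x (g j))"

definition Sy :: "('j \<Rightarrow> 'i \<Rightarrow> complex) \<Rightarrow> ('j \<Rightarrow> complex) \<Rightarrow> ('i \<Rightarrow> complex)" where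
  "Sy g c = (\<lambda>i. \<Sum>\<^sub>\<infinity>j. c j * g j i)"

definition bes :: "('j \<Rightarrow> 'i \<Rightarrow> complex) \<Rightarrow> real \<Rightarrow> bool" where
  "bes g B \<longleftrightarrow> (\<forall>j. is_l2 (g j)) \<and>
     (\<forall>x. is_l2 x \<longrightarrow> is_l2 (An g x) \<and> l2_normsq (An g x) \<le> B * l2_normsq x)"

lemma bessel_on_UNIV_iff: "bessel_on UNIV g \<longleftrightarrow> (\<exists>B. bes g B)"
  unfolding bessel_on_def bes_def An_def is_l2_def l2_normsq_def by auto

lemma bes_l2: "bes g B \<Longrightarrow> is_l2 (g j)"
  unfolding bes_def by blast

lemma bes_An: "bes g B \<Longrightarrow> is_l2 x \<Longrightarrow> is_l2 (An g x)"
  unfolding bes_def by blast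

lemma bes_An_bound: "bes g B \<Longrightarrow> is_l2 x \<Longrightarrow> l2_normsq (An g x) \<le> B * l2_normsq x"
  unfolding bes_def by blast

lemma bes_nonneg: "bes g B \<Longrightarrow> B \<ge> 0"
  using bes_An_bound[of g B "ev undefined"] nsq_nonneg[of "An g (ev undefined)"] by simp

lemma bes_An_nrm: "bes g B \<Longrightarrow> is_l2 x \<Longrightarrow> nrm (An g x) \<le> sqrt B * nrm x"
  unfolding nrm_def using bes_An_bound[of g B x]
  by (metis real_sqrt_le_mono real_sqrt_mult)

lemma An_lin:
  assumes "\<And>j. is_l2 (g j)" "is_l2 x" "is_l2 y"
  shows "An g (\<lambda>i. a * x i + b * y i) = (\<lambda>j. a * An g x j + b * An g y j)"
  unfolding An_def using inn_lin_left[OF assms(2,3) assms(1)] by simp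

lemma An_diff:
  assumes "\<And>j. is_l2 (g j)" "is_l2 x" "is_l2 y"
  shows "An g (\<lambda>i. x i - y i) = (\<lambda>j. An g x j - An g y j)"
  using An_lin[OF assms, where a=1 and b="-1"] by simp

lemma An_bop: "bes g B \<Longrightarrow> bounded_op (An g)"
  by (rule bop_intro[where C="sqrt B"]) (auto intro: bes_An bes_An_nrm An_lin bes_l2)

lemma bes_col: "bes g B \<Longrightarrow> is_l2 (\<lambda>j. g j i)"
proof -
  assume b: "bes g B"
  have "is_l2 (An g (ev i))" by (rule bes_An[OF b is_l2_ev])
  hence "is_l2 (\<lambda>j. cnj (An g (ev i) j))" by (rule is_l2_cnj)
  thus ?thesis unfolding An_def by (simp add: inn_ev_left)
qed

lemma Sy_summable: "bes g B \<Longrightarrow> is_l2 c \<Longrightarrow> (\<lambda>j. c j * g j i) summable_on UNIV"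
  using summable_prod[of c "\<lambda>j. cnj (g j i)"] is_l2_cnj[OF bes_col[of g B i]] by simp

lemma Sy_trunc:
  assumes b: "bes g B" and c: "is_l2 c" and F: "finite F"
  shows "l2_inner (Sy g c) (trunc F y) = l2_inner c (An g (trunc F y))"
proof -
  have "l2_inner (Sy g c) (trunc F y) = (\<Sum>i\<in>F. (\<Sum>\<^sub>\<infinity>j. c j * g j i) * cnj (y i))"
    unfolding inn_trunc_right[OF F] Sy_def ..
  also have "\<dots> = (\<Sum>i\<in>F. \<Sum>\<^sub>\<infinity>j. c j * g j i * cnj (y i))"
    by (intro sum.cong refl infsum_cmult_left[symmetric] Sy_summable[OF b c])
  also have "\<dots> = (\<Sum>\<^sub>\<infinity>j. \<Sum>i\<in>F. c j * g j i * cnj (y i))"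
    by (intro infsum_finsum[symmetric] F summable_on_cmult_left Sy_summable[OF b c])
  also have "\<dots> = l2_inner c (An g (trunc F y))"
    unfolding l2_inner_def[of c] An_def
  proof (rule infsum_cong)
    fix j
    have "l2_inner (trunc F y) (g j) = (\<Sum>i\<in>F. y i * cnj (g j i))" by (rule inn_trunc_left[OF F])
    thus "(\<Sum>i\<in>F. c j * g j i * cnj (y i)) = c j * cnj (l2_inner (trunc F y) (g j))"
      by (simp add: cnj_sum sum_distrib_left mult.commute mult.left_commute)
  qed
  finally show ?thesis .
qed

lemma Sy_l2:
  fixes g :: "'j \<Rightarrow> 'i \<Rightarrow> complex"
  assumes b: "bes g B" and c: "is_l2 c"
  shows "is_l2 (Sy g c) \<and> l2_normsq (Sy g c) \<le> B * l2_normsq c"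
proof -
  let ?s = "Sy g c"
  have B0: "B \<ge> 0" by (rule bes_nonneg[OF b])
  have "is_l2 ?s \<and> l2_normsq ?s \<le> (nrm c * sqrt B)^2"
  proof (rule l2_of_finite_bound_sqrt)
    show "nrm c * sqrt B \<ge> 0" using nrm_nonneg[of c] B0 by simp
    fix F :: "'i set" assume F: "finite F"
    have tl: "is_l2 (trunc F ?s)" by (rule is_l2_trunc[OF F])
    have "(\<Sum>i\<in>F. (cmod (?s i))^2) = Re (l2_inner ?s (trunc F ?s))"
      unfolding inn_trunc_right[OF F]
      by (simp add: complex_norm_square[symmetric] del: of_real_power)
    also have "\<dots> = Re (l2_inner c (An g (trunc F ?s)))" unfolding Sy_trunc[OF b c F] ..
    also have "\<dots> \<le> cmod (l2_inner c (An g (trunc F ?s)))" by (rule complex_Re_le_cmod)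
    also have "\<dots> \<le> nrm c * nrm (An g (trunc F ?s))" by (intro CS c bes_An[OF b tl])
    also have "\<dots> \<le> nrm c * (sqrt B * nrm (trunc F ?s))"
      by (intro mult_left_mono bes_An_nrm[OF b tl] nrm_nonneg)
    also have "nrm (trunc F ?s) = sqrt (\<Sum>i\<in>F. (cmod (?s i))^2)"
      unfolding nrm_def nsq_trunc[OF F] ..
    finally show "(\<Sum>i\<in>F. (cmod (?s i))^2) \<le> nrm c * sqrt B * sqrt (\<Sum>i\<in>F. (cmod (?s i))^2)"
      by (simp add: mult.assoc)
  qed
  thus ?thesis using B0 by (simp add: power_mult_distrib nrm_sq mult.commute)
qed

lemma Sy_adj:
  fixes g :: "'j \<Rightarrow> 'i \<Rightarrow> complex"
  assumes b: "bes g B" and c: "is_l2 c" and y: "is_l2 y"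
  shows "l2_inner (Sy g c) y = l2_inner c (An g y)"
proof (rule lim_pattern[where K="nrm c * sqrt B"])
  show "is_l2 (Sy g c)" using Sy_l2[OF b c] by blast
  show "is_l2 y" by (rule y)
  fix F :: "'i set" assume F: "finite F"
  show "l2_inner (Sy g c) (trunc F y) = l2_inner c (An g (trunc F y))" by (rule Sy_trunc[OF b c F])
  have tl: "is_l2 (trunc F y)" by (rule is_l2_trunc[OF F])
  have d: "is_l2 (\<lambda>i. y i - trunc F y i)" by (intro is_l2_diff y tl)
  have "l2_inner c (An g y) - l2_inner c (An g (trunc F y)) = l2_inner c (An g (\<lambda>i. y i - trunc F y i))"
    unfolding An_diff[OF bes_l2[OF b] y tl]
    by (rule inn_diff_right[symmetric]) (intro bes_An[OF b] y tl c)+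
  also have "cmod \<dots> \<le> nrm c * nrm (An g (\<lambda>i. y i - trunc F y i))" by (intro CS c bes_An[OF b d])
  also have "\<dots> \<le> nrm c * (sqrt B * nrm (\<lambda>i. y i - trunc F y i))"
    by (intro mult_left_mono bes_An_nrm[OF b d] nrm_nonneg)
  finally show "cmod (l2_inner c (An g y) - l2_inner c (An g (trunc F y))) \<le> nrm c * sqrt B * nrm (\<lambda>i. y i - trunc F y i)"
    by (simp add: mult.assoc)
qed

lemma Sy_lin:
  assumes b: "bes g B" and c: "is_l2 c" and d: "is_l2 d"
  shows "Sy g (\<lambda>j. a * c j + e * d j) = (\<lambda>i. a * Sy g c i + e * Sy g d i)"
proof
  fix i
  have "(\<Sum>\<^sub>\<infinity>j. (a * c j + e * d j) * g j i) = (\<Sum>\<^sub>\<infinity>j. a * (c j * g j i) + e * (d j * g j i))"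
    by (simp add: algebra_simps)
  also have "\<dots> = (\<Sum>\<^sub>\<infinity>j. a * (c j * g j i)) + (\<Sum>\<^sub>\<infinity>j. e * (d j * g j i))"
    by (intro infsum_add summable_on_cmult_right Sy_summable[OF b c] Sy_summable[OF b d])
  also have "\<dots> = a * Sy g c i + e * Sy g d i"
    unfolding Sy_def
    using infsum_cmult_right[OF Sy_summable[OF b c], of a i] infsum_cmult_right[OF Sy_summable[OF b d], of e i]
    by simp
  finally show "Sy g (\<lambda>j. a * c j + e * d j) i = a * Sy g c i + e * Sy g d i"
    unfolding Sy_def by simp
qed

lemma Sy_bop: "bes g B \<Longrightarrow> bounded_op (Sy g)"
  unfolding bounded_op_def using Sy_l2 Sy_lin by blast



lemma frame_inverse:
  assumes b: "bes g B" and A: "A > 0"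
    and lb: "\<And>x. is_l2 x \<Longrightarrow> A * l2_normsq x \<le> l2_normsq (An g x)"
  shows "\<exists>Si. bounded_op Si \<and> (\<forall>x. is_l2 x \<longrightarrow> Si (Sy g (An g x)) = x \<and> Sy g (An g (Si x)) = x)"
proof (rule neumann)
  show "bounded_op (\<lambda>x. Sy g (An g x))" by (rule bop_comp[OF Sy_bop[OF b] An_bop[OF b]])
  have e: "l2_inner (Sy g (An g x)) y = l2_inner (An g x) (An g y)" if "is_l2 x" "is_l2 y" for x y
    by (intro Sy_adj[OF b] bes_An[OF b] that)
  fix x y :: "'b \<Rightarrow> complex"
  assume x: "is_l2 x"
  show "A * l2_normsq x \<le> Re (l2_inner (Sy g (An g x)) x)"
    unfolding e[OF x x] by (simp add: inn_self lb[OF x])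
  show "Re (l2_inner (Sy g (An g x)) x) \<le> B * l2_normsq x"
    unfolding e[OF x x] by (simp add: inn_self bes_An_bound[OF b x])
  assume y: "is_l2 y"
  show "l2_inner (Sy g (An g x)) y = l2_inner x (Sy g (An g y))"
    unfolding e[OF x y] inn_conj[of x] e[OF y x] inn_conj[of "An g y"] by simp
qed (rule A)

lemma frame_left_inv:
  assumes b: "bes g B" and A: "A > 0"
    and lb: "\<And>x. is_l2 x \<Longrightarrow> A * l2_normsq x \<le> l2_normsq (An g x)"
  shows "\<exists>L. bounded_op L \<and> (\<forall>x. is_l2 x \<longrightarrow> L (An g x) = x)"
proof -
  obtain Si where Si: "bounded_op Si" "\<And>x. is_l2 x \<Longrightarrow> Si (Sy g (An g x)) = x"
    using frame_inverse[OF b A lb] by blast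
  show ?thesis
    by (rule exI[where x="\<lambda>c. Si (Sy g c)"]) (simp add: bop_comp[OF Si(1) Sy_bop[OF b]] Si(2))
qed

lemma frame_right_inv:
  assumes b: "bes g B" and A: "A > 0"
    and lb: "\<And>x. is_l2 x \<Longrightarrow> A * l2_normsq x \<le> l2_normsq (An g x)"
    and inj: "\<And>c. is_l2 c \<Longrightarrow> Sy g c = (\<lambda>i. 0) \<Longrightarrow> c = (\<lambda>j. 0)"
  shows "\<exists>V. bounded_op V \<and> (\<forall>c. is_l2 c \<longrightarrow> An g (V c) = c)"
proof -
  obtain Si where Si: "bounded_op Si" "\<And>x. is_l2 x \<Longrightarrow> Sy g (An g (Si x)) = x"
    using frame_inverse[OF b A lb] by blast
  have "An g (Si (Sy g c)) = c" if c: "is_l2 c" for c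
  proof -
    have sc: "is_l2 (Sy g c)" using Sy_l2[OF b c] by blast
    have l: "is_l2 (An g (Si (Sy g c)))" by (rule bes_An[OF b bop_l2[OF Si(1) sc]])
    have "Sy g (\<lambda>j. An g (Si (Sy g c)) j - c j) = (\<lambda>i. Sy g (An g (Si (Sy g c))) i - Sy g c i)"
      using Sy_lin[OF b l c, where a=1 and e="-1"] by simp
    also have "\<dots> = (\<lambda>i. 0)" unfolding Si(2)[OF sc] by simp
    finally have "(\<lambda>j. An g (Si (Sy g c)) j - c j) = (\<lambda>j. 0)"
      by (rule inj[OF is_l2_diff[OF l c]])
    show ?thesis
    proof
      fix j
      show "An g (Si (Sy g c)) j = c j" using fun_cong[OF \<open>(\<lambda>j. An g (Si (Sy g c)) j - c j) = (\<lambda>j. 0)\<close>, of j] by simp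
    qed
  qed
  thus ?thesis
    by (intro exI[where x="\<lambda>c. Si (Sy g c)"]) (simp add: bop_comp[OF Si(1) Sy_bop[OF b]])
qed



lemma frame_on_UNIV_iff:
  "frame_on UNIV f \<longleftrightarrow> (\<exists>B. bes f B) \<and> (\<exists>A>0. \<forall>x. is_l2 x \<longrightarrow> A * l2_normsq x \<le> l2_normsq (An f x))"
  unfolding frame_on_def bessel_on_UNIV_iff unfolding An_def l2_normsq_def by simp

lemma inn_sum_right:
  assumes "finite K" "\<And>k. k \<in> K \<Longrightarrow> is_l2 (w k)" "is_l2 z"
  shows "l2_inner z (\<lambda>i. \<Sum>k\<in>K. a k * w k i) = (\<Sum>k\<in>K. cnj (a k) * l2_inner z (w k))"
  using assms(1,2)
proof (induction K rule: finite_induct)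
  case (insert k K)
  have l: "is_l2 (w k)" "is_l2 (\<lambda>i. \<Sum>k\<in>K. a k * w k i)"
    using insert by (auto intro!: is_l2_sum is_l2_scale)
  have "l2_inner z (\<lambda>i. \<Sum>k\<in>insert k K. a k * w k i) = l2_inner z (\<lambda>i. a k * w k i + 1 * (\<Sum>k\<in>K. a k * w k i))"
    using insert by simp
  also have "\<dots> = cnj (a k) * l2_inner z (w k) + l2_inner z (\<lambda>i. \<Sum>k\<in>K. a k * w k i)"
    using inn_lin_right[OF l assms(3), where a="a k" and b=1] by simp
  finally show ?case using insert by simp
qed simp

lemma inn_sum_left:
  assumes "finite K" "\<And>k. k \<in> K \<Longrightarrow> is_l2 (w k)" "is_l2 z"
  shows "l2_inner (\<lambda>i. \<Sum>k\<in>K. w k i) z = (\<Sum>k\<in>K. l2_inner (w k) z)"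
  using assms(1,2)
proof (induction K rule: finite_induct)
  case (insert k K)
  have l: "is_l2 (w k)" "is_l2 (\<lambda>i. \<Sum>k\<in>K. w k i)"
    using insert by (auto intro!: is_l2_sum)
  have "l2_inner (\<lambda>i. \<Sum>k\<in>insert k K. w k i) z = l2_inner (\<lambda>i. 1 * w k i + 1 * (\<Sum>k\<in>K. w k i)) z"
    using insert by simp
  also have "\<dots> = l2_inner (w k) z + l2_inner (\<lambda>i. \<Sum>k\<in>K. w k i) z"
    using inn_lin_left[OF l assms(3), where a=1 and b=1] by simp
  finally show ?case using insert by simp
qed simp

lemma trunc_as_sum: "finite F \<Longrightarrow> trunc F v = (\<lambda>i'. \<Sum>i\<in>F. v i * ev i i')"
  unfolding trunc_def ev_def by (auto simp: if_distrib sum.If_cases cong: if_cong)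

lemma adjoint_exists:
  fixes S :: "('a \<Rightarrow> complex) \<Rightarrow> ('b \<Rightarrow> complex)"
  assumes S: "bounded_op S" and z: "is_l2 z"
  shows "\<exists>y. is_l2 y \<and> (\<forall>v. is_l2 v \<longrightarrow> l2_inner y v = l2_inner z (S v))"
proof -
  obtain C where C: "C \<ge> 0" "\<And>x. is_l2 x \<Longrightarrow> nrm (S x) \<le> C * nrm x" using bop_bound[OF S] by blast
  define y where "y = (\<lambda>i. l2_inner z (S (ev i)))"
  have tr: "l2_inner y (trunc F v) = l2_inner z (S (trunc F v))" if F: "finite F" for F v
  proof -
    have "S (trunc F v) = (\<lambda>i'. \<Sum>i\<in>F. S (\<lambda>i'. v i * ev i i') i')"
      unfolding trunc_as_sum[OF F] by (rule bop_sum[OF S F]) (rule is_l2_scale[OF is_l2_ev])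
    also have "\<dots> = (\<lambda>i'. \<Sum>i\<in>F. v i * S (ev i) i')"
      by (simp add: bop_scale[OF S is_l2_ev])
    finally have "S (trunc F v) = (\<lambda>i'. \<Sum>i\<in>F. v i * S (ev i) i')" .
    hence "l2_inner z (S (trunc F v)) = (\<Sum>i\<in>F. cnj (v i) * l2_inner z (S (ev i)))"
      using inn_sum_right[OF F, of "\<lambda>i. S (ev i)" z v] bop_l2[OF S] z by simp
    thus ?thesis unfolding inn_trunc_right[OF F] y_def by (simp add: mult.commute)
  qed
  have yl2: "is_l2 y \<and> l2_normsq y \<le> (nrm z * C)^2"
  proof (rule l2_of_finite_bound_sqrt)
    show "nrm z * C \<ge> 0" using nrm_nonneg[of z] C by simp
    fix F :: "'a set" assume F: "finite F"
    have tl: "is_l2 (trunc F y)" by (rule is_l2_trunc[OF F])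
    have "(\<Sum>i\<in>F. (cmod (y i))^2) = Re (l2_inner y (trunc F y))"
      unfolding inn_trunc_right[OF F]
      by (simp add: complex_norm_square[symmetric] del: of_real_power)
    also have "\<dots> = Re (l2_inner z (S (trunc F y)))" unfolding tr[OF F] ..
    also have "\<dots> \<le> cmod (l2_inner z (S (trunc F y)))" by (rule complex_Re_le_cmod)
    also have "\<dots> \<le> nrm z * nrm (S (trunc F y))" by (intro CS z bop_l2[OF S tl])
    also have "\<dots> \<le> nrm z * (C * nrm (trunc F y))"
      by (intro mult_left_mono C tl nrm_nonneg)
    also have "nrm (trunc F y) = sqrt (\<Sum>i\<in>F. (cmod (y i))^2)"
      unfolding nrm_def nsq_trunc[OF F] ..
    finally show "(\<Sum>i\<in>F. (cmod (y i))^2) \<le> nrm z * C * sqrt (\<Sum>i\<in>F. (cmod (y i))^2)"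
      by (simp add: mult.assoc)
  qed
  have "l2_inner y v = l2_inner z (S v)" if v: "is_l2 v" for v
  proof (rule lim_pattern[where K="nrm z * C"])
    show "is_l2 y" using yl2 by blast
    show "is_l2 v" by (rule v)
    fix F :: "'a set" assume F: "finite F"
    show "l2_inner y (trunc F v) = l2_inner z (S (trunc F v))" by (rule tr[OF F])
    have tl: "is_l2 (trunc F v)" by (rule is_l2_trunc[OF F])
    have d: "is_l2 (\<lambda>i. v i - trunc F v i)" by (intro is_l2_diff v tl)
    have "l2_inner z (S v) - l2_inner z (S (trunc F v)) = l2_inner z (S (\<lambda>i. v i - trunc F v i))"
      unfolding bop_diff[OF S v tl]
      by (rule inn_diff_right[symmetric]) (intro bop_l2[OF S] v tl z)+
    also have "cmod \<dots> \<le> nrm z * nrm (S (\<lambda>i. v i - trunc F v i))" by (intro CS z bop_l2[OF S d])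
    also have "\<dots> \<le> nrm z * (C * nrm (\<lambda>i. v i - trunc F v i))"
      by (intro mult_left_mono C d nrm_nonneg)
    finally show "cmod (l2_inner z (S v) - l2_inner z (S (trunc F v))) \<le> nrm z * C * nrm (\<lambda>i. v i - trunc F v i)"
      by (simp add: mult.assoc)
  qed
  thus ?thesis using yl2 by blast
qed

lemma riesz_inj:
  assumes R: "riesz_basis_on UNIV f" and b: "bes f B" and c: "is_l2 c" and z: "Sy f c = (\<lambda>i. 0)"
  shows "c = (\<lambda>j. 0)"
proof
  fix j0
  obtain u T where u: "orthonormal_basis_on UNIV u" and T: "bounded_invertible_op T"
    and fT: "\<And>j. f j = T (u j)"
    using R unfolding riesz_basis_on_def by blast
  obtain S0 where S0: "bounded_op S0" "\<And>x. is_l2 x \<Longrightarrow> S0 (T x) = x"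
    using T unfolding bounded_invertible_op_def by blast
  have ul2: "is_l2 (u j)" for j using u unfolding orthonormal_basis_on_def by blast
  have uo: "l2_inner (u j) (u j') = (if j = j' then 1 else 0)" for j j'
    using u unfolding orthonormal_basis_on_def by blast
  obtain y where y: "is_l2 y" "\<And>v. is_l2 v \<Longrightarrow> l2_inner y v = l2_inner (u j0) (S0 v)"
    using adjoint_exists[OF S0(1) ul2[of j0]] by blast
  have Tl2: "is_l2 (T (u j))" for j using T ul2 unfolding bounded_invertible_op_def bounded_op_def by blast
  have yf: "l2_inner y (f j) = (if j0 = j then 1 else 0)" for j
    unfolding fT y(2)[OF Tl2] S0(2)[OF ul2] uo ..
  have "0 = l2_inner (Sy f c) y" unfolding z by simp
  also have "\<dots> = l2_inner c (An f y)" by (rule Sy_adj[OF b c y(1)])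
  also have "\<dots> = (\<Sum>\<^sub>\<infinity>j. c j * (if j0 = j then 1 else 0))"
    unfolding An_def yf l2_inner_def[of c] by (rule infsum_cong) simp
  also have "\<dots> = c j0"
    by (subst infsum_cong_neutral[where T="{j0}" and g="\<lambda>_. c j0"]) auto
  finally show "c j0 = 0" by simp
qed

lemma riesz_right_inv:
  assumes R: "riesz_basis_on UNIV f"
  shows "\<exists>V. bounded_op V \<and> (\<forall>c. is_l2 c \<longrightarrow> An f (V c) = c)"
proof -
  have F: "frame_on UNIV f" using R unfolding riesz_basis_on_def by blast
  obtain B A where b: "bes f B" and A: "A > 0" and lb: "\<And>x. is_l2 x \<Longrightarrow> A * l2_normsq x \<le> l2_normsq (An f x)"
    using F unfolding frame_on_UNIV_iff by blast
  show ?thesis by (rule frame_right_inv[OF b A lb riesz_inj[OF R b]])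
qed



lemma swap_summable:
  "f summable_on UNIV \<longleftrightarrow> (\<lambda>p. f (prod.swap p)) summable_on UNIV"
  using summable_on_reindex_bij_betw[of prod.swap UNIV UNIV f]
  by (simp add: bij_betw_def)

lemma swap_infsum:
  "infsum f UNIV = infsum (\<lambda>p. f (prod.swap p)) UNIV"
  using infsum_reindex_bij_betw[of prod.swap UNIV UNIV f]
  by (simp add: bij_betw_def)

lemma nn_fubini:
  fixes f :: "'a \<times> 'b \<Rightarrow> real"
  assumes nn: "\<And>p. f p \<ge> 0"
    and s1: "\<And>x. (\<lambda>y. f (x, y)) summable_on UNIV"
    and s2: "(\<lambda>x. infsum (\<lambda>y. f (x, y)) UNIV) summable_on UNIV"
  shows "f summable_on UNIV \<and> infsum f UNIV = infsum (\<lambda>x. infsum (\<lambda>y. f (x, y)) UNIV) UNIV"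
proof -
  have "f summable_on Sigma UNIV (\<lambda>_. UNIV)"
    by (rule summable_on_SigmaI[OF _ s2]) (auto intro: has_sum_infsum s1 nn)
  hence s: "f summable_on UNIV" by simp
  have "infsum (\<lambda>x. infsum (\<lambda>y. f (x, y)) UNIV) UNIV = infsum f (Sigma UNIV (\<lambda>_. UNIV))"
    by (rule infsum_Sigma_banach) (use s in simp)
  thus ?thesis using s by simp
qed

lemma nn_fubini_D:
  fixes f :: "'a \<times> 'b \<Rightarrow> real"
  assumes s: "f summable_on UNIV"
  shows "(\<forall>x. (\<lambda>y. f (x, y)) summable_on UNIV) \<and> (\<lambda>x. infsum (\<lambda>y. f (x, y)) UNIV) summable_on UNIV
     \<and> infsum f UNIV = infsum (\<lambda>x. infsum (\<lambda>y. f (x, y)) UNIV) UNIV"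
proof -
  have s': "f summable_on Sigma UNIV (\<lambda>_. UNIV)" using s by simp
  have a: "(\<lambda>y. f (x, y)) summable_on UNIV" for x
    using summable_on_SigmaD1[of "\<lambda>x y. f (x, y)" UNIV "\<lambda>_. UNIV" x] s' by simp
  have b: "(\<lambda>x. infsum (\<lambda>y. f (x, y)) UNIV) summable_on UNIV"
    using summable_on_SigmaD[OF s'] a by simp
  have "infsum (\<lambda>x. infsum (\<lambda>y. f (x, y)) UNIV) UNIV = infsum f (Sigma UNIV (\<lambda>_. UNIV))"
    by (rule infsum_Sigma_banach) (use s' in simp)
  thus ?thesis using a b by simp
qed

definition tens :: "('a \<Rightarrow> complex) \<Rightarrow> ('b \<Rightarrow> complex) \<Rightarrow> ('a \<times> 'b \<Rightarrow> complex)" where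
  "tens a b = (\<lambda>(i, i'). a i * b i')"

definition rw :: "('a \<times> 'b \<Rightarrow> complex) \<Rightarrow> 'a \<Rightarrow> 'b \<Rightarrow> complex" where
  "rw z i = (\<lambda>i'. z (i, i'))"

definition ctr :: "('a \<times> 'b \<Rightarrow> complex) \<Rightarrow> ('b \<Rightarrow> complex) \<Rightarrow> 'a \<Rightarrow> complex" where
  "ctr z b = (\<lambda>i. l2_inner (rw z i) b)"

lemma tens_l2:
  assumes a: "is_l2 a" and b: "is_l2 b"
  shows "is_l2 (tens a b) \<and> l2_normsq (tens a b) = l2_normsq a * l2_normsq b"
proof -
  let ?f = "\<lambda>p. (cmod (tens a b p))^2"
  have e: "?f (i, i') = (cmod (a i))^2 * (cmod (b i'))^2" for i i'
    unfolding tens_def by (simp add: norm_mult power_mult_distrib)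
  have in1: "infsum (\<lambda>i'. ?f (i, i')) UNIV = (cmod (a i))^2 * l2_normsq b" for i
    unfolding e l2_normsq_def by (rule infsum_cmult_right) (use b in \<open>simp add: is_l2_def\<close>)
  have F: "?f summable_on UNIV \<and> infsum ?f UNIV = infsum (\<lambda>i. infsum (\<lambda>i'. ?f (i, i')) UNIV) UNIV"
  proof (rule nn_fubini)
    show "(\<lambda>i'. ?f (i, i')) summable_on UNIV" for i
      unfolding e by (rule summable_on_cmult_right) (use b in \<open>simp add: is_l2_def\<close>)
    show "(\<lambda>i. infsum (\<lambda>i'. ?f (i, i')) UNIV) summable_on UNIV"
      unfolding in1 by (rule summable_on_cmult_left) (use a in \<open>simp add: is_l2_def\<close>)
  qed simp
  have "infsum (\<lambda>i. infsum (\<lambda>i'. ?f (i, i')) UNIV) UNIV = l2_normsq a * l2_normsq b"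
    unfolding in1 l2_normsq_def by (rule infsum_cmult_left) (use a in \<open>simp add: is_l2_def\<close>)
  thus ?thesis using F unfolding is_l2_def l2_normsq_def[of "tens a b"] by simp
qed

lemma row_l2:
  assumes z: "is_l2 z"
  shows "is_l2 (rw z i) \<and> (\<lambda>i. l2_normsq (rw z i)) summable_on UNIV \<and>
    infsum (\<lambda>i. l2_normsq (rw z i)) UNIV = l2_normsq z"
  using nn_fubini_D[of "\<lambda>p. (cmod (z p))^2"] z
  unfolding is_l2_def l2_normsq_def rw_def by simp

lemma ctr_l2:
  assumes z: "is_l2 z" and b: "is_l2 b"
  shows "is_l2 (ctr z b) \<and> l2_normsq (ctr z b) \<le> l2_normsq z * l2_normsq b"
proof -
  have le: "(cmod (ctr z b i))^2 \<le> l2_normsq (rw z i) * l2_normsq b" for i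
    unfolding ctr_def using CS_sq row_l2[OF z] b by blast
  have s: "(\<lambda>i. l2_normsq (rw z i) * l2_normsq b) summable_on UNIV"
    using row_l2[OF z] by (intro summable_on_cmult_left) blast
  have l: "is_l2 (ctr z b)" unfolding is_l2_def
    by (rule summable_on_comparison_test[OF s le]) simp
  have "l2_normsq (ctr z b) \<le> infsum (\<lambda>i. l2_normsq (rw z i) * l2_normsq b) UNIV"
    unfolding l2_normsq_def[of "ctr z b"] using l s le unfolding is_l2_def by (intro infsum_mono) auto
  also have "\<dots> = l2_normsq z * l2_normsq b"
    using row_l2[OF z] by (subst infsum_cmult_left) auto
  finally show ?thesis using l by blast
qed

lemma inn_tens:
  assumes z: "is_l2 z" and a: "is_l2 a" and b: "is_l2 b"
  shows "l2_inner z (tens a b) = l2_inner (ctr z b) a"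
proof -
  have t: "is_l2 (tens a b)" using tens_l2[OF a b] by blast
  have s: "(\<lambda>p. z p * cnj (tens a b p)) summable_on UNIV" by (rule summable_prod[OF z t])
  have "l2_inner z (tens a b) = infsum (\<lambda>p. z p * cnj (tens a b p)) (Sigma UNIV (\<lambda>_. UNIV))"
    unfolding l2_inner_def by simp
  also have "\<dots> = infsum (\<lambda>i. infsum (\<lambda>i'. z (i, i') * cnj (tens a b (i, i'))) UNIV) UNIV"
    by (rule infsum_Sigma_banach[symmetric]) (use s in simp)
  also have "\<dots> = infsum (\<lambda>i. ctr z b i * cnj (a i)) UNIV"
  proof (rule infsum_cong)
    fix i
    have "infsum (\<lambda>i'. z (i, i') * cnj (tens a b (i, i'))) UNIV = infsum (\<lambda>i'. (z (i, i') * cnj (b i')) * cnj (a i)) UNIV"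
      unfolding tens_def by (simp add: algebra_simps)
    also have "\<dots> = infsum (\<lambda>i'. z (i, i') * cnj (b i')) UNIV * cnj (a i)"
      by (rule infsum_cmult_left) (use summable_prod[OF conjunct1[OF row_l2[OF z, of i]] b] in \<open>simp add: rw_def\<close>)
    finally show "infsum (\<lambda>i'. z (i, i') * cnj (tens a b (i, i'))) UNIV = ctr z b i * cnj (a i)"
      unfolding ctr_def l2_inner_def rw_def .
  qed
  finally show ?thesis unfolding l2_inner_def[of "ctr z b"] .
qed

lemma ctr_bop:
  fixes b :: "'b \<Rightarrow> complex"
  assumes b: "is_l2 b"
  shows "bounded_op (\<lambda>z. ctr z b)"
proof (rule bop_intro[where C="nrm b"])
  fix z :: "'a \<times> 'b \<Rightarrow> complex" assume z: "is_l2 z"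
  show "is_l2 (ctr z b)" using ctr_l2[OF z b] by blast
  have "l2_normsq (ctr z b) \<le> (nrm b * nrm z)^2"
    using ctr_l2[OF z b] by (simp add: power_mult_distrib nrm_sq mult.commute)
  thus "nrm (ctr z b) \<le> nrm b * nrm z" unfolding nrm_def[of "ctr z b"]
    by (rule real_le_lsqrt[OF mult_nonneg_nonneg[OF nrm_nonneg nrm_nonneg]])
next
  fix x y :: "'a \<times> 'b \<Rightarrow> complex" and a c assume x: "is_l2 x" and y: "is_l2 y"
  show "ctr (\<lambda>i. a * x i + c * y i) b = (\<lambda>i. a * ctr x b i + c * ctr y b i)"
  proof
    fix i
    have "rw (\<lambda>i. a * x i + c * y i) i = (\<lambda>i'. a * rw x i i' + c * rw y i i')"
      unfolding rw_def by simp
    thus "ctr (\<lambda>i. a * x i + c * y i) b i = a * ctr x b i + c * ctr y b i"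
      unfolding ctr_def using inn_lin_left[OF conjunct1[OF row_l2[OF x]] conjunct1[OF row_l2[OF y]] b] by simp
  qed
qed

lemma inn_tens_tens:
  assumes "is_l2 x" "is_l2 y" "is_l2 a" "is_l2 b"
  shows "l2_inner (tens x y) (tens a b) = l2_inner x a * l2_inner y b"
proof -
  have c: "ctr (tens x y) b = (\<lambda>i. l2_inner y b * x i)"
  proof
    fix i
    have "rw (tens x y) i = (\<lambda>i'. x i * y i' + 0 * y i')" unfolding rw_def tens_def by simp
    thus "ctr (tens x y) b i = l2_inner y b * x i"
      unfolding ctr_def using inn_lin_left[OF assms(2) assms(2) assms(4), of "x i" 0] by simp
  qed
  show ?thesis
    unfolding inn_tens[OF conjunct1[OF tens_l2[OF assms(1,2)]] assms(3,4)] c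
    using inn_lin_left[OF assms(1) assms(1) assms(3), of "l2_inner y b" 0] by (simp add: mult.commute)
qed



lemma tens_bessel:
  fixes a :: "'m \<Rightarrow> 'a \<Rightarrow> complex" and b :: "'n \<Rightarrow> 'b \<Rightarrow> complex"
  assumes ba: "bes a Ba" and bb: "bes b Bb" and z: "is_l2 z"
  shows "(\<lambda>p. (cmod (l2_inner z (tens (a (fst p)) (b (snd p)))))^2) summable_on UNIV \<and>
    infsum (\<lambda>p. (cmod (l2_inner z (tens (a (fst p)) (b (snd p)))))^2) UNIV \<le> Ba * Bb * l2_normsq z"
proof -
  have Ba0: "Ba \<ge> 0" by (rule bes_nonneg[OF ba])
  have Bb0: "Bb \<ge> 0" by (rule bes_nonneg[OF bb])
  have rl: "is_l2 (rw z i)" for i using row_l2[OF z] by blast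
  define h where "h = (\<lambda>p. (cmod (l2_inner (rw z (fst p)) (b (snd p))))^2)"
  have hi: "(\<lambda>n. h (i, n)) summable_on UNIV" for i
    using bes_An[OF bb rl[of i]] unfolding h_def is_l2_def An_def by simp
  have hi_le: "infsum (\<lambda>n. h (i, n)) UNIV \<le> Bb * l2_normsq (rw z i)" for i
  proof -
    have "l2_normsq (An b (rw z i)) = infsum (\<lambda>n. h (i, n)) UNIV" unfolding h_def An_def l2_normsq_def by simp
    thus ?thesis using bes_An_bound[OF bb rl[of i]] by simp
  qed
  have rs: "(\<lambda>i. Bb * l2_normsq (rw z i)) summable_on UNIV"
    using row_l2[OF z] by (intro summable_on_cmult_right) blast
  have hF: "h summable_on UNIV \<and> infsum h UNIV = infsum (\<lambda>i. infsum (\<lambda>n. h (i, n)) UNIV) UNIV"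
  proof (rule nn_fubini)
    show "(\<lambda>i. infsum (\<lambda>n. h (i, n)) UNIV) summable_on UNIV"
      by (rule summable_on_comparison_test[OF rs hi_le]) (auto intro: infsum_nonneg simp: h_def)
    show "(\<lambda>n. h (i, n)) summable_on UNIV" for i by (rule hi)
  qed (simp add: h_def)
  have h_le: "infsum h UNIV \<le> Bb * l2_normsq z"
  proof -
    have "infsum h UNIV \<le> infsum (\<lambda>i. Bb * l2_normsq (rw z i)) UNIV"
      unfolding hF[THEN conjunct2]
      by (rule infsum_mono[OF _ rs hi_le]) (rule summable_on_comparison_test[OF rs hi_le], auto intro: infsum_nonneg simp: h_def)
    also have "\<dots> = Bb * l2_normsq z"
      using row_l2[OF z] by (subst infsum_cmult_right) auto
    finally show ?thesis .
  qed
  have hs': "(\<lambda>p. h (prod.swap p)) summable_on UNIV" using hF swap_summable by blast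
  note hD = nn_fubini_D[OF hs']
  have hcol: "infsum (\<lambda>i. h (i, n)) UNIV = l2_normsq (ctr z (b n))" for n
    unfolding h_def l2_normsq_def ctr_def by simp
  have hcs: "(\<lambda>n. l2_normsq (ctr z (b n))) summable_on UNIV"
    using hD hcol by simp
  have hcsum: "infsum (\<lambda>n. l2_normsq (ctr z (b n))) UNIV \<le> Bb * l2_normsq z"
    using hD hcol swap_infsum[of h] h_le by simp
  have cl: "is_l2 (ctr z (b n))" for n using ctr_l2[OF z bes_l2[OF bb]] by blast
  define G' where "G' = (\<lambda>p. (cmod (l2_inner z (tens (a (snd p)) (b (fst p)))))^2)"
  have G'e: "G' (n, m) = (cmod (l2_inner (ctr z (b n)) (a m)))^2" for n m
    unfolding G'_def using inn_tens[OF z bes_l2[OF ba] bes_l2[OF bb]] by simp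
  have Gn: "(\<lambda>m. G' (n, m)) summable_on UNIV" for n
    using bes_An[OF ba cl[of n]] unfolding G'e is_l2_def An_def by simp
  have Gn_le: "infsum (\<lambda>m. G' (n, m)) UNIV \<le> Ba * l2_normsq (ctr z (b n))" for n
  proof -
    have "l2_normsq (An a (ctr z (b n))) = infsum (\<lambda>m. G' (n, m)) UNIV" unfolding G'e An_def l2_normsq_def by simp
    thus ?thesis using bes_An_bound[OF ba cl[of n]] by simp
  qed
  have cs: "(\<lambda>n. Ba * l2_normsq (ctr z (b n))) summable_on UNIV"
    using hcs by (rule summable_on_cmult_right)
  have GF: "G' summable_on UNIV \<and> infsum G' UNIV = infsum (\<lambda>n. infsum (\<lambda>m. G' (n, m)) UNIV) UNIV"
  proof (rule nn_fubini)
    show "(\<lambda>n. infsum (\<lambda>m. G' (n, m)) UNIV) summable_on UNIV"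
      by (rule summable_on_comparison_test[OF cs Gn_le]) (auto intro: infsum_nonneg simp: G'_def)
    show "(\<lambda>m. G' (n, m)) summable_on UNIV" for n by (rule Gn)
  qed (simp add: G'_def)
  have "infsum G' UNIV \<le> infsum (\<lambda>n. Ba * l2_normsq (ctr z (b n))) UNIV"
    unfolding GF[THEN conjunct2]
    by (rule infsum_mono[OF _ cs Gn_le]) (rule summable_on_comparison_test[OF cs Gn_le], auto intro: infsum_nonneg simp: G'_def)
  also have "\<dots> = Ba * infsum (\<lambda>n. l2_normsq (ctr z (b n))) UNIV"
    using hcs by (rule infsum_cmult_right)
  also have "\<dots> \<le> Ba * (Bb * l2_normsq z)" using hcsum Ba0 by (rule mult_left_mono)
  finally have Gle: "infsum G' UNIV \<le> Ba * Bb * l2_normsq z" by (simp add: mult.assoc)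
  have eq: "(\<lambda>p. (cmod (l2_inner z (tens (a (fst p)) (b (snd p)))))^2) = (\<lambda>p. G' (prod.swap p))"
    unfolding G'_def by auto
  show ?thesis unfolding eq using GF swap_summable[of G'] swap_infsum[of G'] Gle by simp
qed

lemma ts_eq: "tensor_seq r f1 f2 p = (\<lambda>q. \<Sum>k<r. tens (f1 k (fst p)) (f2 k (snd p)) q)"
  unfolding tensor_seq_def tens_def by (auto split: prod.splits)

lemma tens_is_l2: "is_l2 a \<Longrightarrow> is_l2 b \<Longrightarrow> is_l2 (tens a b)"
  using tens_l2 by blast

lemma ts_l2:
  assumes "\<forall>k<r. \<forall>n. is_l2 (f1 k n)" "\<forall>k<r. \<forall>n. is_l2 (f2 k n)"
  shows "is_l2 (tensor_seq r f1 f2 p)"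
  unfolding ts_eq using assms by (intro is_l2_sum) (auto intro!: tens_is_l2)

lemma inn_ts:
  assumes "\<forall>k<r. \<forall>n. is_l2 (f1 k n)" "\<forall>k<r. \<forall>n. is_l2 (f2 k n)" "is_l2 z"
  shows "l2_inner z (tensor_seq r f1 f2 p) = (\<Sum>k<r. l2_inner z (tens (f1 k (fst p)) (f2 k (snd p))))"
proof -
  have "l2_inner z (\<lambda>q. \<Sum>k<r. 1 * tens (f1 k (fst p)) (f2 k (snd p)) q) = (\<Sum>k<r. cnj 1 * l2_inner z (tens (f1 k (fst p)) (f2 k (snd p))))"
    by (rule inn_sum_right) (use assms in \<open>auto intro!: tens_is_l2\<close>)
  thus ?thesis unfolding ts_eq by simp
qed

lemma sum_sq_le:
  fixes w :: "nat \<Rightarrow> complex"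
  shows "(cmod (\<Sum>k<r. w k))^2 \<le> real r * (\<Sum>k<r. (cmod (w k))^2)"
proof -
  have "(cmod (\<Sum>k<r. w k))^2 \<le> (\<Sum>k<r. cmod (w k))^2"
    by (intro power_mono norm_sum) simp
  also have "\<dots> \<le> (\<Sum>k<r. (cmod (w k))^2) * card {..<r}" by (rule sum_squared_le_sum_of_squares)
  finally show ?thesis by (simp add: mult.commute)
qed

lemma bessel_ts:
  assumes l1: "\<forall>k<r. \<forall>n. is_l2 (f1 k n)" and l2: "\<forall>k<r. \<forall>n. is_l2 (f2 k n)"
    and b1: "\<And>k. k < r \<Longrightarrow> bes (f1 k) (B1 k)" and b2: "\<And>k. k < r \<Longrightarrow> bes (f2 k) (B2 k)"
  shows "bes (tensor_seq r f1 f2) (real r * (\<Sum>k<r. B1 k * B2 k))"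
  unfolding bes_def
proof (intro conjI allI impI)
  show "is_l2 (tensor_seq r f1 f2 p)" for p by (rule ts_l2[OF l1 l2])
  fix z :: "nat \<times> nat \<Rightarrow> complex" assume z: "is_l2 z"
  define G where "G = (\<lambda>k p. (cmod (l2_inner z (tens (f1 k (fst p)) (f2 k (snd p)))))^2)"
  have Gk: "G k summable_on UNIV \<and> infsum (G k) UNIV \<le> B1 k * B2 k * l2_normsq z" if "k < r" for k
    unfolding G_def by (rule tens_bessel[OF b1[OF that] b2[OF that] z])
  have le: "(cmod (An (tensor_seq r f1 f2) z p))^2 \<le> real r * (\<Sum>k<r. G k p)" for p
    unfolding An_def inn_ts[OF l1 l2 z] G_def by (rule sum_sq_le)
  have s: "(\<lambda>p. real r * (\<Sum>k<r. G k p)) summable_on UNIV"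
    using Gk by (intro summable_on_cmult_right summable_on_finsum) auto
  show l: "is_l2 (An (tensor_seq r f1 f2) z)" unfolding is_l2_def
    by (rule summable_on_comparison_test[OF s le]) simp
  have "l2_normsq (An (tensor_seq r f1 f2) z) \<le> infsum (\<lambda>p. real r * (\<Sum>k<r. G k p)) UNIV"
    unfolding l2_normsq_def using l s le unfolding is_l2_def by (intro infsum_mono) auto
  also have "\<dots> = real r * (\<Sum>k<r. infsum (G k) UNIV)"
  proof -
    have sf: "(\<lambda>p. \<Sum>k<r. G k p) summable_on UNIV" by (rule summable_on_finsum) (use Gk in auto)
    have "infsum (\<lambda>p. \<Sum>k<r. G k p) UNIV = (\<Sum>k<r. infsum (G k) UNIV)"
      by (rule infsum_finsum) (use Gk in auto)
    thus ?thesis using infsum_cmult_right[OF sf, of "real r"] by simp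
  qed
  also have "\<dots> \<le> real r * (\<Sum>k<r. B1 k * B2 k * l2_normsq z)"
    using Gk by (intro mult_left_mono sum_mono) auto
  finally show "l2_normsq (An (tensor_seq r f1 f2) z) \<le> real r * (\<Sum>k<r. B1 k * B2 k) * l2_normsq z"
    by (simp add: sum_distrib_right mult.assoc)
qed



lemma W_sum:
  fixes n :: nat and W :: "('k \<Rightarrow> complex) set" and a :: "nat \<Rightarrow> complex"
  assumes sub: "\<And>c d \<alpha> \<beta>. c \<in> W \<Longrightarrow> d \<in> W \<Longrightarrow> (\<lambda>k. \<alpha> * c k + \<beta> * d k) \<in> W"
    and zero: "(\<lambda>k. 0) \<in> W" and w: "\<And>j. j < n \<Longrightarrow> w j \<in> W"
  shows "(\<lambda>k. \<Sum>j<n. a j * w j k) \<in> W"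
  using w
proof (induction n)
  case 0 thus ?case using zero by simp
next
  case (Suc n)
  have "(\<lambda>k. 1 * (\<Sum>j<n. a j * w j k) + a n * w n k) \<in> W"
    using Suc by (intro sub) auto
  thus ?case by simp
qed

lemma fin_span:
  fixes W V :: "(nat \<Rightarrow> complex) set"
  assumes sub: "\<And>c d \<alpha> \<beta>. c \<in> W \<Longrightarrow> d \<in> W \<Longrightarrow> (\<lambda>k. \<alpha> * c k + \<beta> * d k) \<in> W"
    and zero: "(\<lambda>k. 0) \<in> W"
    and loc: "\<And>w u. w \<in> W \<Longrightarrow> (\<And>k. k < r \<Longrightarrow> u k = w k) \<Longrightarrow> u \<in> W"
    and VW: "V \<subseteq> W"
    and ann: "\<And>c. (\<And>v. v \<in> V \<Longrightarrow> (\<Sum>k<r. c k * v k) = 0) \<Longrightarrow> (\<forall>k<r. c k = 0)"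
  shows "\<forall>k<r. ev k \<in> W"
  using assms
proof (induction r arbitrary: W V)
  case 0 thus ?case by simp
next
  case (Suc r W V)
  have "\<exists>v0\<in>V. v0 r \<noteq> 0"
  proof (rule ccontr)
    assume "\<not> (\<exists>v0\<in>V. v0 r \<noteq> 0)"
    hence "\<And>v. v \<in> V \<Longrightarrow> (\<Sum>k<Suc r. ev r k * v k) = 0"
      unfolding ev_def by (auto simp: if_distrib sum.If_cases cong: if_cong)
    hence "\<forall>k<Suc r. ev r k = 0" by (rule Suc.prems(5))
    thus False unfolding ev_def by auto
  qed
  then obtain v0 where v0: "v0 \<in> V" "v0 r \<noteq> 0" by blast
  have v0W: "v0 \<in> W" using v0 Suc.prems(4) by blast
  define W' where "W' = {u. u(r := 0) \<in> W}"
  define V' where "V' = (\<lambda>w. (\<lambda>k. w k - (w r / v0 r) * v0 k)) ` V"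
  have IH: "\<forall>k<r. ev k \<in> W'"
  proof (rule Suc.IH)
    fix c d \<alpha> \<beta> assume "c \<in> W'" "d \<in> W'"
    hence "c(r := 0) \<in> W" "d(r := 0) \<in> W" unfolding W'_def by auto
    hence "(\<lambda>k. \<alpha> * (c(r := 0)) k + \<beta> * (d(r := 0)) k) \<in> W"
      by (rule Suc.prems(1))
    moreover have "(\<lambda>k. \<alpha> * c k + \<beta> * d k)(r := 0) = (\<lambda>k. \<alpha> * (c(r := 0)) k + \<beta> * (d(r := 0)) k)"
      by auto
    ultimately show "(\<lambda>k. \<alpha> * c k + \<beta> * d k) \<in> W'" unfolding W'_def by simp
  next
    show "(\<lambda>k. 0) \<in> W'" unfolding W'_def using Suc.prems(2) by (simp add: fun_upd_idem)
  next
    fix w u assume w: "w \<in> W'" and u: "\<And>k. k < r \<Longrightarrow> u k = w k"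
    have "u(r := 0) \<in> W"
      by (rule Suc.prems(3)[OF w[unfolded W'_def, simplified]]) (auto simp: u less_Suc_eq)
    thus "u \<in> W'" unfolding W'_def by simp
  next
    show "V' \<subseteq> W'"
    proof
      fix e assume "e \<in> V'"
      then obtain w where w: "w \<in> V" and e: "e = (\<lambda>k. w k - (w r / v0 r) * v0 k)" unfolding V'_def by blast
      have "(\<lambda>k. 1 * w k + (- (w r / v0 r)) * v0 k) \<in> W"
        using w Suc.prems(4) v0W by (intro Suc.prems(1)) auto
      moreover have "e(r := 0) = (\<lambda>k. 1 * w k + (- (w r / v0 r)) * v0 k)"
        unfolding e using v0(2) by auto
      ultimately show "e \<in> W'" unfolding W'_def by simp
    qed
  next
    fix c' assume ann': "\<And>e. e \<in> V' \<Longrightarrow> (\<Sum>k<r. c' k * e k) = 0"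
    define c where "c = c'(r := - (\<Sum>k<r. c' k * v0 k) / v0 r)"
    have "\<forall>k<Suc r. c k = 0"
    proof (rule Suc.prems(5))
      fix w assume w: "w \<in> V"
      have "(\<Sum>k<r. c' k * (w k - (w r / v0 r) * v0 k)) = 0"
        using ann'[of "\<lambda>k. w k - (w r / v0 r) * v0 k"] w unfolding V'_def by blast
      hence "(\<Sum>k<r. c' k * w k) = (w r / v0 r) * (\<Sum>k<r. c' k * v0 k)"
        by (simp add: algebra_simps sum_subtractf sum_distrib_left)
      moreover have "(\<Sum>k<Suc r. c k * w k) = (\<Sum>k<r. c' k * w k) + c r * w r"
      proof -
        have "(\<Sum>k<r. c k * w k) = (\<Sum>k<r. c' k * w k)" by (rule sum.cong) (auto simp: c_def)
        thus ?thesis by simp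
      qed
      ultimately show "(\<Sum>k<Suc r. c k * w k) = 0"
        unfolding c_def using v0(2) by (simp add: field_simps)
    qed
    show "\<forall>k<r. c' k = 0"
    proof (intro allI impI)
      fix k assume k: "k < r"
      hence "c k = 0" using \<open>\<forall>k<Suc r. c k = 0\<close> by simp
      thus "c' k = 0" using k unfolding c_def by simp
    qed
  qed
  have evk: "ev k \<in> W" if "k < r" for k
  proof -
    have "(ev k)(r := 0) \<in> W" using IH that unfolding W'_def by blast
    moreover have "(ev k)(r := 0) = ev k" using that unfolding ev_def by auto
    ultimately show ?thesis by simp
  qed
  have sW: "(\<lambda>k'. \<Sum>j<r. v0 j * ev j k') \<in> W"
  proof (rule W_sum[where W=W and n=r and w="\<lambda>j. ev j" and a=v0])
    show "(\<lambda>k. \<alpha> * c k + \<beta> * d k) \<in> W" if "c \<in> W" "d \<in> W" for c d \<alpha> \<beta>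
      using Suc.prems(1) that by blast
    show "(\<lambda>k. 0) \<in> W" by (rule Suc.prems(2))
    show "ev j \<in> W" if "j < r" for j by (rule evk[OF that])
  qed
  have uW: "(\<lambda>k. (1 / v0 r) * v0 k + (- 1 / v0 r) * (\<Sum>j<r. v0 j * ev j k)) \<in> W"
    by (rule Suc.prems(1)[OF v0W sW])
  have "ev r \<in> W"
  proof (rule Suc.prems(3)[OF uW])
    fix k assume k: "k < Suc r"
    show "ev r k = (1 / v0 r) * v0 k + (- 1 / v0 r) * (\<Sum>j<r. v0 j * ev j k)"
    proof (cases "k = r")
      case True thus ?thesis using v0(2) unfolding ev_def by simp
    next
      case False
      hence kr: "k < r" using k by simp
      have "(\<Sum>j<r. v0 j * ev j k) = v0 k"
        unfolding ev_def using kr by (simp add: if_distrib sum.If_cases cong: if_cong)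
      thus ?thesis using False unfolding ev_def by (simp add: field_simps)
    qed
  qed
  thus ?case using evk less_Suc_eq by auto
qed



lemma bes_lin2:
  assumes b1: "bes g B1" and b2: "bes g' B2"
  shows "bes (\<lambda>n i. \<alpha> * g n i + \<beta> * g' n i) (2 * (cmod \<alpha>)^2 * B1 + 2 * (cmod \<beta>)^2 * B2)"
  unfolding bes_def
proof (intro conjI allI impI)
  show "is_l2 (\<lambda>i. \<alpha> * g n i + \<beta> * g' n i)" for n by (intro is_l2_lin bes_l2[OF b1] bes_l2[OF b2])
  fix y :: "'b \<Rightarrow> complex" assume y: "is_l2 y"
  have e: "An (\<lambda>n i. \<alpha> * g n i + \<beta> * g' n i) y = (\<lambda>n. cnj \<alpha> * An g y n + cnj \<beta> * An g' y n)"
    unfolding An_def using inn_lin_right[OF bes_l2[OF b1] bes_l2[OF b2] y] by simp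
  have a1: "is_l2 (An g y)" "is_l2 (An g' y)" using bes_An b1 b2 y by blast+
  show "is_l2 (An (\<lambda>n i. \<alpha> * g n i + \<beta> * g' n i) y)" unfolding e by (intro is_l2_lin a1)
  have s: "(\<lambda>n. 2 * (cmod (cnj \<alpha>))^2 * (cmod (An g y n))^2 + 2 * (cmod (cnj \<beta>))^2 * (cmod (An g' y n))^2) summable_on UNIV"
    using a1 unfolding is_l2_def by (intro summable_on_add summable_on_cmult_right) auto
  have "l2_normsq (An (\<lambda>n i. \<alpha> * g n i + \<beta> * g' n i) y)
      \<le> infsum (\<lambda>n. 2 * (cmod (cnj \<alpha>))^2 * (cmod (An g y n))^2 + 2 * (cmod (cnj \<beta>))^2 * (cmod (An g' y n))^2) UNIV"
    unfolding e l2_normsq_def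
    by (rule infsum_mono[OF _ s sq_lin_bound]) (use is_l2_lin[OF a1] in \<open>simp add: is_l2_def\<close>)
  also have "\<dots> = 2 * (cmod \<alpha>)^2 * l2_normsq (An g y) + 2 * (cmod \<beta>)^2 * l2_normsq (An g' y)"
    unfolding l2_normsq_def using a1 unfolding is_l2_def
    by (subst infsum_add) (auto intro: summable_on_cmult_right simp: infsum_cmult_right)
  also have "\<dots> \<le> 2 * (cmod \<alpha>)^2 * (B1 * l2_normsq y) + 2 * (cmod \<beta>)^2 * (B2 * l2_normsq y)"
    by (intro add_mono mult_left_mono bes_An_bound[OF b1 y] bes_An_bound[OF b2 y]) auto
  finally show "l2_normsq (An (\<lambda>n i. \<alpha> * g n i + \<beta> * g' n i) y) \<le> (2 * (cmod \<alpha>)^2 * B1 + 2 * (cmod \<beta>)^2 * B2) * l2_normsq y"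
    by (simp add: algebra_simps)
qed

lemma bes_zero: "bes (\<lambda>n i. 0) 0"
  unfolding bes_def An_def by simp

lemma tensor_bessel_right:
  assumes l1: "\<forall>k<r. \<forall>n. is_l2 (f1 k n)" and l2: "\<forall>k<r. \<forall>n. is_l2 (f2 k n)"
    and indep1: "lin_indep_seqs r f1" and bT: "bes (tensor_seq r f1 f2) B"
  shows "\<forall>k<r. \<exists>B'. bes (f2 k) B'"
proof -
  define comb where "comb = (\<lambda>c n i. \<Sum>k<r. c k * f2 k n i)"
  define W where "W = {c. \<exists>B'. bes (comb c) B'}"
  define V where "V = {v. \<exists>x m. is_l2 x \<and> v = (\<lambda>k. cnj (l2_inner x (f1 k m)))}"
  have "\<forall>k<r. ev k \<in> W"
  proof (rule fin_span)
    fix c d \<alpha> \<beta> assume "c \<in> W" "d \<in> W"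
    then obtain B1 B2 where "bes (comb c) B1" "bes (comb d) B2" unfolding W_def by blast
    from bes_lin2[OF this, of \<alpha> \<beta>]
    have "bes (comb (\<lambda>k. \<alpha> * c k + \<beta> * d k)) (2 * (cmod \<alpha>)^2 * B1 + 2 * (cmod \<beta>)^2 * B2)"
      unfolding comb_def by (simp add: algebra_simps sum.distrib sum_distrib_left)
    thus "(\<lambda>k. \<alpha> * c k + \<beta> * d k) \<in> W" unfolding W_def by blast
  next
    show "(\<lambda>k. 0) \<in> W" unfolding W_def comb_def using bes_zero by auto
  next
    fix w u assume "w \<in> W" and u: "\<And>k. k < r \<Longrightarrow> u k = w k"
    have "comb u = comb w" unfolding comb_def using u by (auto intro!: sum.cong)
    thus "u \<in> W" using \<open>w \<in> W\<close> unfolding W_def by simp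
  next
    show "V \<subseteq> W"
    proof
      fix v assume "v \<in> V"
      then obtain x m where x: "is_l2 x" and v: "v = (\<lambda>k. cnj (l2_inner x (f1 k m)))" unfolding V_def by blast
      have "bes (comb v) (B * l2_normsq x)" unfolding bes_def
      proof (intro conjI allI impI)
        show "is_l2 (comb v n)" for n
          unfolding comb_def using l2 by (intro is_l2_sum is_l2_scale) auto
        fix y :: "nat \<Rightarrow> complex" assume y: "is_l2 y"
        have txy: "is_l2 (tens x y)" using tens_l2[OF x y] by blast
        have eq: "An (comb v) y n = An (tensor_seq r f1 f2) (tens x y) (m, n)" for n
        proof -
          have "An (comb v) y n = (\<Sum>k<r. cnj (v k) * l2_inner y (f2 k n))"
            unfolding An_def comb_def using inn_sum_right[of "{..<r}" "\<lambda>k. f2 k n" y v] l2 y by simp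
          also have "\<dots> = (\<Sum>k<r. l2_inner (tens x y) (tens (f1 k m) (f2 k n)))"
            unfolding v using inn_tens_tens[OF x y] l1 l2 by (intro sum.cong) auto
          also have "\<dots> = An (tensor_seq r f1 f2) (tens x y) (m, n)"
            unfolding An_def using inn_ts[OF l1 l2 txy, of "(m, n)"] by simp
          finally show ?thesis .
        qed
        define Q where "Q = (\<lambda>p. (cmod (An (tensor_seq r f1 f2) (tens x y) p))^2)"
        have Qs: "Q summable_on UNIV" using bes_An[OF bT txy] unfolding Q_def is_l2_def .
        note QD = nn_fubini_D[OF Qs]
        show "is_l2 (An (comb v) y)" unfolding is_l2_def eq using QD unfolding Q_def by simp
        have "l2_normsq (An (comb v) y) = infsum (\<lambda>n. Q (m, n)) UNIV"
          unfolding l2_normsq_def eq Q_def ..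
        also have "\<dots> = sum (\<lambda>m. infsum (\<lambda>n. Q (m, n)) UNIV) {m}" by simp
        also have "\<dots> \<le> infsum (\<lambda>m. infsum (\<lambda>n. Q (m, n)) UNIV) UNIV"
          using QD by (intro finite_sum_le_infsum) (auto intro: infsum_nonneg simp: Q_def)
        also have "\<dots> = l2_normsq (An (tensor_seq r f1 f2) (tens x y))"
          using QD unfolding Q_def l2_normsq_def by simp
        also have "\<dots> \<le> B * l2_normsq (tens x y)" by (rule bes_An_bound[OF bT txy])
        also have "\<dots> = B * l2_normsq x * l2_normsq y" using tens_l2[OF x y] by simp
        finally show "l2_normsq (An (comb v) y) \<le> B * l2_normsq x * l2_normsq y" .
      qed
      thus "v \<in> W" unfolding W_def by blast
    qed
  next
    fix c assume ann: "\<And>v. v \<in> V \<Longrightarrow> (\<Sum>k<r. c k * v k) = 0"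
    define p where "p = (\<lambda>m i. \<Sum>k<r. c k * f1 k m i)"
    have pl: "is_l2 (p m)" for m unfolding p_def using l1 by (intro is_l2_sum is_l2_scale) auto
    have pz: "p m = (\<lambda>i. 0)" for m
    proof -
      have "(\<Sum>k<r. c k * cnj (l2_inner (p m) (f1 k m))) = 0"
        using ann[of "\<lambda>k. cnj (l2_inner (p m) (f1 k m))"] pl unfolding V_def by blast
      moreover have "(\<Sum>k<r. c k * cnj (l2_inner (p m) (f1 k m))) = l2_inner (p m) (p m)"
      proof -
        have pm: "p m = (\<lambda>i. \<Sum>k<r. c k * f1 k m i)" by (simp add: p_def)
        have "l2_inner (\<lambda>i. \<Sum>k<r. c k * f1 k m i) (p m) = (\<Sum>k<r. l2_inner (\<lambda>i. c k * f1 k m i) (p m))"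
          by (rule inn_sum_left) (use l1 pl in \<open>auto intro!: is_l2_scale\<close>)
        also have "\<dots> = (\<Sum>k<r. c k * cnj (l2_inner (p m) (f1 k m)))"
        proof (rule sum.cong)
          fix k assume "k \<in> {..<r}"
          hence fl: "is_l2 (f1 k m)" using l1 by simp
          have "l2_inner (\<lambda>i. c k * f1 k m i + 0 * f1 k m i) (p m) = c k * l2_inner (f1 k m) (p m) + 0 * l2_inner (f1 k m) (p m)"
            by (rule inn_lin_left[OF fl fl pl])
          thus "l2_inner (\<lambda>i. c k * f1 k m i) (p m) = c k * cnj (l2_inner (p m) (f1 k m))"
            by (simp add: inn_conj[of "f1 k m"])
        qed simp
        finally show ?thesis unfolding pm[symmetric] by simp
      qed
      ultimately have "l2_normsq (p m) = 0" by (simp add: inn_self)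
      thus ?thesis by (rule nsq_eq_0[OF pl])
    qed
    have "\<forall>m i. (\<Sum>k<r. c k * f1 k m i) = 0" using pz unfolding p_def by meson
    thus "\<forall>k<r. c k = 0" using indep1 unfolding lin_indep_seqs_def by blast
  qed
  moreover have "comb (ev k) = f2 k" if "k < r" for k
  proof (intro ext)
    fix n i
    have "comb (ev k) n i = (\<Sum>k'\<in>{..<r}. if k' = k then f2 k' n i else 0)"
      unfolding comb_def by (rule sum.cong) (auto simp: ev_def)
    also have "\<dots> = f2 k n i" using that by (simp add: sum.delta)
    finally show "comb (ev k) n i = f2 k n i" .
  qed
  ultimately show ?thesis unfolding W_def by auto
qed



definition sw :: "('a \<times> 'b \<Rightarrow> complex) \<Rightarrow> ('b \<times> 'a \<Rightarrow> complex)" where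
  "sw z = (\<lambda>p. z (prod.swap p))"

lemma sw_sw[simp]: "sw (sw z) = z"
  unfolding sw_def by simp

lemma sw_l2: "is_l2 (sw z) \<longleftrightarrow> is_l2 z"
  unfolding is_l2_def sw_def using swap_summable[of "\<lambda>p. (cmod (z p))^2"] by simp

lemma sw_nsq: "l2_normsq (sw z) = l2_normsq z"
  unfolding l2_normsq_def sw_def using swap_infsum[of "\<lambda>p. (cmod (z p))^2"] by simp

lemma sw_inn: "l2_inner (sw z) (sw w) = l2_inner z w"
  unfolding l2_inner_def sw_def using swap_infsum[of "\<lambda>p. z p * cnj (w p)"] by simp

lemma sw_bop: "bounded_op (\<lambda>z :: 'a \<times> 'b \<Rightarrow> complex. sw z)"
proof (rule bop_intro[where C=1])
  fix x :: "'a \<times> 'b \<Rightarrow> complex" assume "is_l2 x"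
  thus "is_l2 (sw x)" by (simp add: sw_l2)
  show "nrm (sw x) \<le> 1 * nrm x" by (simp add: nrm_def sw_nsq)
next
  fix x y :: "'a \<times> 'b \<Rightarrow> complex" and a b
  show "sw (\<lambda>i. a * x i + b * y i) = (\<lambda>i. a * sw x i + b * sw y i)" by (simp add: sw_def)
qed

lemma ts_swap: "tensor_seq r f2 f1 (prod.swap p) = sw (tensor_seq r f1 f2 p)"
  unfolding tensor_seq_def sw_def by (auto simp: mult.commute split: prod.splits)

lemma An_ts_swap: "An (tensor_seq r fb fa) z = sw (An (tensor_seq r fa fb) (sw z))"
proof
  fix p :: "nat \<times> nat"
  have "An (tensor_seq r fb fa) z p = l2_inner (sw (sw z)) (tensor_seq r fb fa (prod.swap (prod.swap p)))"
    unfolding An_def by simp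
  also have "\<dots> = l2_inner (sw z) (tensor_seq r fa fb (prod.swap p))"
    unfolding ts_swap sw_inn ..
  finally show "An (tensor_seq r fb fa) z p = sw (An (tensor_seq r fa fb) (sw z)) p"
    unfolding An_def sw_def by simp
qed

lemma bes_ts_swap:
  assumes "bes (tensor_seq r f1 f2) B"
  shows "bes (tensor_seq r f2 f1) B"
  unfolding bes_def
proof (intro conjI allI impI)
  fix p :: "nat \<times> nat"
  have "is_l2 (sw (tensor_seq r f1 f2 (prod.swap p)))"
    unfolding sw_l2 by (rule bes_l2[OF assms])
  thus "is_l2 (tensor_seq r f2 f1 p)" using ts_swap[of r f2 f1 "prod.swap p"] by simp
next
  fix z :: "nat \<times> nat \<Rightarrow> complex" assume z: "is_l2 z"
  hence z': "is_l2 (sw z)" by (simp add: sw_l2)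
  show "is_l2 (An (tensor_seq r f2 f1) z)"
    unfolding An_ts_swap[where fa=f1 and fb=f2] sw_l2 by (rule bes_An[OF assms z'])
  show "l2_normsq (An (tensor_seq r f2 f1) z) \<le> B * l2_normsq z"
    unfolding An_ts_swap[where fa=f1 and fb=f2] sw_nsq using bes_An_bound[OF assms z'] by (simp add: sw_nsq)
qed

lemma frame_ts_swap:
  assumes "frame_on UNIV (tensor_seq r f1 f2)"
  shows "frame_on UNIV (tensor_seq r f2 f1)"
proof -
  obtain B A where b: "bes (tensor_seq r f1 f2) B" and A: "A > 0"
    and lb: "\<And>x. is_l2 x \<Longrightarrow> A * l2_normsq x \<le> l2_normsq (An (tensor_seq r f1 f2) x)"
    using assms unfolding frame_on_UNIV_iff by blast
  have "A * l2_normsq z \<le> l2_normsq (An (tensor_seq r f2 f1) z)" if "is_l2 z" for z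
    unfolding An_ts_swap[where fa=f1 and fb=f2] sw_nsq using lb[of "sw z"] that by (simp add: sw_l2 sw_nsq)
  thus ?thesis unfolding frame_on_UNIV_iff using bes_ts_swap[OF b] A by blast
qed

lemma right_inv_swap:
  assumes V: "bounded_op V" "\<And>c. is_l2 c \<Longrightarrow> An (tensor_seq r f1 f2) (V c) = c"
  shows "\<exists>V'. bounded_op V' \<and> (\<forall>c. is_l2 c \<longrightarrow> An (tensor_seq r f2 f1) (V' c) = c)"
proof (intro exI conjI allI impI)
  show "bounded_op (\<lambda>c. sw (V (sw c)))"
    by (rule bop_comp[OF sw_bop bop_comp[OF V(1) sw_bop]])
  fix c :: "nat \<times> nat \<Rightarrow> complex" assume c: "is_l2 c"
  show "An (tensor_seq r f2 f1) (sw (V (sw c))) = c"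
  proof -
    have c': "is_l2 (sw c)" by (simp add: sw_l2 c)
    show ?thesis unfolding An_ts_swap[where fa=f1 and fb=f2] sw_sw V(2)[OF c'] by simp
  qed
qed

lemma fin_supp_sum:
  fixes a :: "nat \<Rightarrow> 'b::{topological_comm_monoid_add, t2_space}"
  shows "(\<lambda>k. if k < r then a k else 0) summable_on UNIV \<and> infsum (\<lambda>k. if k < r then a k else 0) UNIV = (\<Sum>k<r. a k)"
proof
  show "(\<lambda>k. if k < r then a k else 0) summable_on UNIV"
    by (rule summable_on_cong_neutral[where S="{..<r}" and f=a, THEN iffD1]) auto
  show "infsum (\<lambda>k. if k < r then a k else 0) UNIV = (\<Sum>k<r. a k)"
    by (subst infsum_cong_neutral[where T="{..<r}" and g=a]) auto
qed

theorem part_i: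
  assumes l1: "\<forall>k<r. \<forall>n. is_l2 (f1 k n)" and l2: "\<forall>k<r. \<forall>n. is_l2 (f2 k n)"
    and indep1: "lin_indep_seqs r f1" and indep2: "lin_indep_seqs r f2"
  shows "bessel_on UNIV (tensor_seq r f1 f2) \<longleftrightarrow> (\<forall>k<r. bessel_on UNIV (f1 k) \<and> bessel_on UNIV (f2 k))"
proof
  assume "bessel_on UNIV (tensor_seq r f1 f2)"
  then obtain B where b: "bes (tensor_seq r f1 f2) B" unfolding bessel_on_UNIV_iff by blast
  have "\<forall>k<r. \<exists>B'. bes (f2 k) B'" by (rule tensor_bessel_right[OF l1 l2 indep1 b])
  moreover have "\<forall>k<r. \<exists>B'. bes (f1 k) B'" by (rule tensor_bessel_right[OF l2 l1 indep2 bes_ts_swap[OF b]])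
  ultimately show "\<forall>k<r. bessel_on UNIV (f1 k) \<and> bessel_on UNIV (f2 k)"
    unfolding bessel_on_UNIV_iff by blast
next
  assume a: "\<forall>k<r. bessel_on UNIV (f1 k) \<and> bessel_on UNIV (f2 k)"
  define B1 where "B1 = (\<lambda>k. SOME B. bes (f1 k) B)"
  define B2 where "B2 = (\<lambda>k. SOME B. bes (f2 k) B)"
  have b1: "bes (f1 k) (B1 k)" if "k < r" for k
    unfolding B1_def using a that unfolding bessel_on_UNIV_iff by (metis someI_ex)
  have b2: "bes (f2 k) (B2 k)" if "k < r" for k
    unfolding B2_def using a that unfolding bessel_on_UNIV_iff by (metis someI_ex)
  show "bessel_on UNIV (tensor_seq r f1 f2)"
    unfolding bessel_on_UNIV_iff using bessel_ts[OF l1 l2 b1 b2] by blast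
qed



lemma assoc_An: "assoc_op f = An f"
  unfolding assoc_op_def An_def by (rule ext) simp

definition blk :: "nat \<Rightarrow> (nat \<Rightarrow> complex) \<Rightarrow> (nat \<times> nat \<Rightarrow> complex)" where
  "blk k c = (\<lambda>p. if fst p = k then c (snd p) else 0)"

lemma blk_l2:
  assumes c: "is_l2 c"
  shows "is_l2 (blk k c) \<and> l2_normsq (blk k c) = l2_normsq c"
proof -
  let ?Q = "\<lambda>p. (cmod (blk k c p))^2"
  have inner: "infsum (\<lambda>m. ?Q (k', m)) UNIV = (if k' = k then l2_normsq c else 0)" for k'
    unfolding blk_def l2_normsq_def by simp
  have F: "?Q summable_on UNIV \<and> infsum ?Q UNIV = infsum (\<lambda>k'. infsum (\<lambda>m. ?Q (k', m)) UNIV) UNIV"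
  proof (rule nn_fubini)
    show "(\<lambda>m. ?Q (k', m)) summable_on UNIV" for k'
      using c unfolding blk_def is_l2_def by (cases "k' = k") auto
    show "(\<lambda>k'. infsum (\<lambda>m. ?Q (k', m)) UNIV) summable_on UNIV"
      unfolding inner
      by (rule summable_on_cong_neutral[where S="{k}" and f="\<lambda>_. l2_normsq c", THEN iffD1]) auto
  qed simp
  have "infsum (\<lambda>k'. infsum (\<lambda>m. ?Q (k', m)) UNIV) UNIV = l2_normsq c"
    unfolding inner by (subst infsum_cong_neutral[where T="{k}" and g="\<lambda>_. l2_normsq c"]) auto
  thus ?thesis using F unfolding is_l2_def l2_normsq_def[of "blk k c"] by simp
qed

lemma blk_bop: "bounded_op (blk k)"
proof (rule bop_intro[where C=1])
  fix x :: "nat \<Rightarrow> complex" assume x: "is_l2 x"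
  show "is_l2 (blk k x)" using blk_l2[OF x] by blast
  show "nrm (blk k x) \<le> 1 * nrm x" unfolding nrm_def using blk_l2[OF x] by simp
next
  fix x y :: "nat \<Rightarrow> complex" and a b
  show "blk k (\<lambda>i. a * x i + b * y i) = (\<lambda>i. a * blk k x i + b * blk k y i)"
    unfolding blk_def by auto
qed

lemma concat_frame:
  assumes l1: "\<forall>k<r. \<forall>n. is_l2 (f1 k n)" and l2: "\<forall>k<r. \<forall>n. is_l2 (f2 k n)"
    and b1: "\<And>k. k < r \<Longrightarrow> bes (f1 k) (B1 k)" and b2: "\<And>k. k < r \<Longrightarrow> bes (f2 k) (B2 k)"
    and F: "frame_on UNIV (tensor_seq r f1 f2)"
  shows "left_inverse_property r f1"
proof -
  define G where "G = (\<lambda>p::nat \<times> nat. if fst p < r then f1 (fst p) (snd p) else (\<lambda>i. 0))"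
  have AnG: "An G x p = (if fst p < r then An (f1 (fst p)) x (snd p) else 0)" for x p
    unfolding G_def An_def by simp
  have Gnsq: "is_l2 (An G x) \<and> l2_normsq (An G x) = (\<Sum>k<r. l2_normsq (An (f1 k) x))" if x: "is_l2 x" for x
  proof -
    let ?Q = "\<lambda>p. (cmod (An G x p))^2"
    have inner: "infsum (\<lambda>m. ?Q (k, m)) UNIV = (if k < r then l2_normsq (An (f1 k) x) else 0)" for k
      unfolding AnG l2_normsq_def by simp
    have Fb: "?Q summable_on UNIV \<and> infsum ?Q UNIV = infsum (\<lambda>k. infsum (\<lambda>m. ?Q (k, m)) UNIV) UNIV"
    proof (rule nn_fubini)
      show "(\<lambda>m. ?Q (k, m)) summable_on UNIV" for k
        using bes_An[OF b1 x, of k] unfolding AnG is_l2_def by (cases "k < r") auto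
      show "(\<lambda>k. infsum (\<lambda>m. ?Q (k, m)) UNIV) summable_on UNIV"
        unfolding inner using fin_supp_sum[of r "\<lambda>k. l2_normsq (An (f1 k) x)"] by blast
    qed simp
    show ?thesis using Fb fin_supp_sum[of r "\<lambda>k. l2_normsq (An (f1 k) x)"]
      unfolding inner is_l2_def l2_normsq_def[of "An G x"] by simp
  qed
  have bG: "bes G (\<Sum>k<r. B1 k)" unfolding bes_def
  proof (intro conjI allI impI)
    show "is_l2 (G p)" for p unfolding G_def using l1 by auto
    fix x :: "nat \<Rightarrow> complex" assume x: "is_l2 x"
    show "is_l2 (An G x)" using Gnsq[OF x] by blast
    have "l2_normsq (An G x) \<le> (\<Sum>k<r. B1 k * l2_normsq x)"
      unfolding Gnsq[OF x, THEN conjunct2] by (intro sum_mono bes_An_bound[OF b1 x]) auto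
    thus "l2_normsq (An G x) \<le> (\<Sum>k<r. B1 k) * l2_normsq x" by (simp add: sum_distrib_right)
  qed
  obtain A where A: "A > 0" and lbT: "\<And>z. is_l2 z \<Longrightarrow> A * l2_normsq z \<le> l2_normsq (An (tensor_seq r f1 f2) z)"
    using F unfolding frame_on_UNIV_iff by blast
  define Bm where "Bm = 1 + (\<Sum>k<r. B2 k)"
  have B2nn: "B2 k \<ge> 0" if "k < r" for k by (rule bes_nonneg[OF b2[OF that]])
  have B2le: "B2 k \<le> Bm" if "k < r" for k
  proof -
    have "B2 k \<le> (\<Sum>k<r. B2 k)" using that B2nn by (intro member_le_sum) auto
    thus ?thesis unfolding Bm_def by simp
  qed
  have Bm0: "Bm > 0"
  proof -
    have "(\<Sum>k<r. B2 k) \<ge> 0" using B2nn by (intro sum_nonneg) auto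
    thus ?thesis unfolding Bm_def by simp
  qed
  define e0 where "e0 = (ev 0 :: nat \<Rightarrow> complex)"
  have key: "A * l2_normsq x \<le> real r * Bm * l2_normsq (An G x)" if x: "is_l2 x" for x
  proof -
    define z where "z = tens x e0"
    have z: "is_l2 z" and nz: "l2_normsq z = l2_normsq x"
      unfolding z_def e0_def using tens_l2[OF x is_l2_ev[of "0::nat"]] by auto
    define t where "t = (\<lambda>k. tens (An (f1 k) x) (An (f2 k) e0))"
    have al: "is_l2 (An (f1 k) x)" "is_l2 (An (f2 k) e0)" if "k < r" for k
      using bes_An[OF b1[OF that] x] bes_An[OF b2[OF that]] unfolding e0_def by auto
    have tl: "is_l2 (t k) \<and> l2_normsq (t k) = l2_normsq (An (f1 k) x) * l2_normsq (An (f2 k) e0)" if "k < r" for k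
      unfolding t_def using tens_l2[OF al[OF that]] .
    have Az: "An (tensor_seq r f1 f2) z p = (\<Sum>k<r. t k p)" for p
    proof -
      have "An (tensor_seq r f1 f2) z p = (\<Sum>k<r. l2_inner z (tens (f1 k (fst p)) (f2 k (snd p))))"
        unfolding An_def by (rule inn_ts[OF l1 l2 z])
      also have "\<dots> = (\<Sum>k<r. t k p)"
      proof (rule sum.cong)
        fix k assume "k \<in> {..<r}"
        hence k: "k < r" by simp
        show "l2_inner z (tens (f1 k (fst p)) (f2 k (snd p))) = t k p"
          unfolding z_def t_def e0_def tens_def An_def
          using inn_tens_tens[OF x is_l2_ev, of "f1 k (fst p)" "f2 k (snd p)" 0] l1 l2 k
          by (simp add: tens_def split: prod.splits)
      qed simp
      finally show ?thesis .
    qed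
    have s: "(\<lambda>p. real r * (\<Sum>k<r. (cmod (t k p))^2)) summable_on UNIV"
      using tl unfolding is_l2_def by (intro summable_on_cmult_right summable_on_finsum) auto
    have "A * l2_normsq x = A * l2_normsq z" using nz by simp
    also have "\<dots> \<le> l2_normsq (An (tensor_seq r f1 f2) z)" by (rule lbT[OF z])
    also have "\<dots> \<le> infsum (\<lambda>p. real r * (\<Sum>k<r. (cmod (t k p))^2)) UNIV"
      unfolding l2_normsq_def[of "An _ z"] Az
      by (rule infsum_mono[OF _ s sum_sq_le])
         (rule summable_on_comparison_test[OF s sum_sq_le], simp)
    also have "\<dots> = real r * (\<Sum>k<r. l2_normsq (t k))"
    proof -
      have sf: "(\<lambda>p. \<Sum>k<r. (cmod (t k p))^2) summable_on UNIV"
        using tl unfolding is_l2_def by (intro summable_on_finsum) auto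
      have "infsum (\<lambda>p. \<Sum>k<r. (cmod (t k p))^2) UNIV = (\<Sum>k<r. l2_normsq (t k))"
        unfolding l2_normsq_def by (rule infsum_finsum) (use tl in \<open>auto simp: is_l2_def\<close>)
      thus ?thesis using infsum_cmult_right[OF sf, of "real r"] by simp
    qed
    also have "\<dots> \<le> real r * (\<Sum>k<r. l2_normsq (An (f1 k) x) * Bm)"
    proof (intro mult_left_mono sum_mono)
      fix k assume "k \<in> {..<r}"
      hence k: "k < r" by simp
      have "l2_normsq (An (f2 k) e0) \<le> B2 k * l2_normsq e0" unfolding e0_def by (rule bes_An_bound[OF b2[OF k] is_l2_ev])
      also have "\<dots> \<le> Bm" using B2le[OF k] unfolding e0_def by simp
      finally show "l2_normsq (t k) \<le> l2_normsq (An (f1 k) x) * Bm"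
        using tl[OF k] by (simp add: mult_left_mono nsq_nonneg)
    qed simp
    also have "\<dots> = real r * Bm * l2_normsq (An G x)"
    proof -
      have "(\<Sum>k<r. l2_normsq (An (f1 k) x) * Bm) = (\<Sum>k<r. l2_normsq (An (f1 k) x)) * Bm"
        by (rule sum_distrib_right[symmetric])
      thus ?thesis using Gnsq[OF x] by (simp only:) (simp add: algebra_simps)
    qed
    finally show ?thesis .
  qed
  have r0: "r > 0"
  proof (rule ccontr)
    assume "\<not> r > 0"
    hence "A * l2_normsq (ev 0 :: nat \<Rightarrow> complex) \<le> 0" using key[OF is_l2_ev] by simp
    thus False using A by simp
  qed
  have lbG: "A / (real r * Bm) * l2_normsq x \<le> l2_normsq (An G x)" if x: "is_l2 x" for x
    using key[OF x] r0 Bm0 by (simp add: field_simps)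
  have A': "A / (real r * Bm) > 0" using A r0 Bm0 by simp
  obtain L0 where L0: "bounded_op L0" "\<And>x. is_l2 x \<Longrightarrow> L0 (An G x) = x"
    using frame_left_inv[OF bG A' lbG] by blast
  have c1: "\<forall>k<r. bounded_op (assoc_op (f1 k))"
    unfolding assoc_An using An_bop b1 by blast
  have c2: "\<exists>L :: nat \<Rightarrow> (nat \<Rightarrow> complex) \<Rightarrow> (nat \<Rightarrow> complex).
        (\<forall>k<r. bounded_op (L k)) \<and>
        (\<forall>x. is_l2 x \<longrightarrow> (\<lambda>i. \<Sum>k<r. L k (assoc_op (f1 k) x) i) = x)"
  proof (intro exI[where x="\<lambda>k c. L0 (blk k c)"] conjI allI impI)
    fix k show "bounded_op (\<lambda>c. L0 (blk k c))" by (rule bop_comp[OF L0(1) blk_bop])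
  next
    fix x :: "nat \<Rightarrow> complex" assume x: "is_l2 x"
    have bl: "is_l2 (blk k (An (f1 k) x))" if "k \<in> {..<r}" for k
      using blk_l2[OF bes_An[OF b1 x]] that by auto
    have "(\<lambda>i. \<Sum>k<r. L0 (blk k (An (f1 k) x)) i) = L0 (\<lambda>p. \<Sum>k<r. blk k (An (f1 k) x) p)"
      by (rule bop_sum[OF L0(1), symmetric]) (use bl in auto)
    also have "(\<lambda>p. \<Sum>k<r. blk k (An (f1 k) x) p) = An G x"
    proof
      fix p :: "nat \<times> nat"
      have "(\<Sum>k<r. blk k (An (f1 k) x) p) = (\<Sum>k\<in>{..<r}. if fst p = k then An (f1 k) x (snd p) else 0)"
        unfolding blk_def ..
      also have "\<dots> = (if fst p < r then An (f1 (fst p)) x (snd p) else 0)"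
        by (simp add: sum.delta)
      finally show "(\<Sum>k<r. blk k (An (f1 k) x) p) = An G x p" unfolding AnG .
    qed
    also have "L0 (An G x) = x" by (rule L0(2)[OF x])
    finally show "(\<lambda>i. \<Sum>k<r. L0 (blk k (assoc_op (f1 k) x)) i) = x" unfolding assoc_An .
  qed
  have c3: "frame_on {(k, m). k < r} (\<lambda>(k, m). f1 k m)"
  proof -
    have eqs: "((\<lambda>j. (cmod (l2_inner x ((\<lambda>(k, m). f1 k m) j)))^2) summable_on {(k, m). k < r} \<longleftrightarrow> is_l2 (An G x))
      \<and> infsum (\<lambda>j. (cmod (l2_inner x ((\<lambda>(k, m). f1 k m) j)))^2) {(k, m). k < r} = l2_normsq (An G x)" for x
    proof
      show "(\<lambda>j. (cmod (l2_inner x ((\<lambda>(k, m). f1 k m) j)))^2) summable_on {(k, m). k < r} \<longleftrightarrow> is_l2 (An G x)"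
        unfolding is_l2_def AnG
        by (rule summable_on_cong_neutral) (auto simp: An_def split: prod.splits)
      show "infsum (\<lambda>j. (cmod (l2_inner x ((\<lambda>(k, m). f1 k m) j)))^2) {(k, m). k < r} = l2_normsq (An G x)"
        unfolding l2_normsq_def AnG
        by (rule infsum_cong_neutral) (auto simp: An_def split: prod.splits)
    qed
    show ?thesis unfolding frame_on_def bessel_on_def
    proof (intro conjI)
      show "\<forall>j\<in>{(k, m). k < r}. is_l2 ((\<lambda>(k, m). f1 k m) j)" using l1 by auto
      show "\<exists>B. \<forall>x. is_l2 x \<longrightarrow>
        (\<lambda>j. (cmod (l2_inner x ((\<lambda>(k, m). f1 k m) j)))^2) summable_on {(k, m). k < r} \<and>
        infsum (\<lambda>j. (cmod (l2_inner x ((\<lambda>(k, m). f1 k m) j)))^2) {(k, m). k < r} \<le> B * l2_normsq x"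
        using eqs bes_An[OF bG] bes_An_bound[OF bG] by metis
      show "\<exists>A>0. \<forall>x. is_l2 x \<longrightarrow> A * l2_normsq x \<le> infsum (\<lambda>j. (cmod (l2_inner x ((\<lambda>(k, m). f1 k m) j)))^2) {(k, m). k < r}"
        using eqs lbG A' by metis
    qed
  qed
  show ?thesis unfolding left_inverse_property_def using c1 c2 c3 by blast
qed



lemma tens_e0_bop: "bounded_op (\<lambda>v :: 'a \<Rightarrow> complex. tens v (ev (0::nat)))"
proof (rule bop_intro[where C=1])
  fix x :: "'a \<Rightarrow> complex" assume x: "is_l2 x"
  show "is_l2 (tens x (ev (0::nat)))" using tens_l2[OF x is_l2_ev[of "0::nat"]] by blast
  show "nrm (tens x (ev (0::nat))) \<le> 1 * nrm x" unfolding nrm_def using tens_l2[OF x is_l2_ev[of "0::nat"]] by simp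
next
  fix x y :: "'a \<Rightarrow> complex" and a b
  show "tens (\<lambda>i. a * x i + b * y i) (ev (0::nat)) = (\<lambda>i. a * tens x (ev 0) i + b * tens y (ev 0) i)"
    unfolding tens_def by (auto simp: algebra_simps)
qed

lemma right_part:
  assumes l1: "\<forall>k<r. \<forall>n. is_l2 (f1 k n)" and l2: "\<forall>k<r. \<forall>n. is_l2 (f2 k n)"
    and V: "bounded_op V" and Vinv: "\<And>c. is_l2 c \<Longrightarrow> An (tensor_seq r f1 f2) (V c) = c"
  shows "right_inverse_property r f1"
  unfolding right_inverse_property_def
proof (intro exI[where x="\<lambda>k v. ctr (V (tens v (ev (0::nat)))) (f2 k 0)"] conjI allI impI)
  fix k assume k: "k < r"
  show "bounded_op (\<lambda>v. ctr (V (tens v (ev (0::nat)))) (f2 k 0))"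
    using bop_comp[OF ctr_bop[of "f2 k 0"] bop_comp[OF V tens_e0_bop]] l2 k by simp
next
  fix v :: "nat \<Rightarrow> complex" assume v: "is_l2 v"
  define z where "z = V (tens v (ev (0::nat)))"
  have tv: "is_l2 (tens v (ev (0::nat)))" using tens_l2[OF v is_l2_ev[of "0::nat"]] by blast
  have z: "is_l2 z" unfolding z_def by (rule bop_l2[OF V tv])
  show "(\<lambda>i. \<Sum>k<r. assoc_op (f1 k) (ctr (V (tens v (ev (0::nat)))) (f2 k 0)) i) = v"
  proof
    fix m
    have "(\<Sum>k<r. assoc_op (f1 k) (ctr z (f2 k 0)) m) = (\<Sum>k<r. l2_inner z (tens (f1 k m) (f2 k 0)))"
    proof (rule sum.cong)
      fix k assume "k \<in> {..<r}"
      hence "is_l2 (f1 k m)" "is_l2 (f2 k 0)" using l1 l2 by auto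
      thus "assoc_op (f1 k) (ctr z (f2 k 0)) m = l2_inner z (tens (f1 k m) (f2 k 0))"
        unfolding assoc_op_def using inn_tens[OF z] by simp
    qed simp
    also have "\<dots> = An (tensor_seq r f1 f2) z (m, 0)"
      unfolding An_def using inn_ts[OF l1 l2 z, of "(m, 0)"] by simp
    also have "\<dots> = tens v (ev (0::nat)) (m, 0)" unfolding z_def Vinv[OF tv] ..
    also have "\<dots> = v m" unfolding tens_def ev_def by simp
    finally show "(\<Sum>k<r. assoc_op (f1 k) (ctr (V (tens v (ev (0::nat)))) (f2 k 0)) m) = v m"
      unfolding z_def .
  qed
qed

theorem theorem3p2:
  fixes r :: nat
    and f1 f2 :: "nat \<Rightarrow> nat \<Rightarrow> nat \<Rightarrow> complex"
  assumes l2_1: "\<forall>k<r. \<forall>n. is_l2 (f1 k n)"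
    and l2_2: "\<forall>k<r. \<forall>n. is_l2 (f2 k n)"
    and indep1: "lin_indep_seqs r f1"
    and indep2: "lin_indep_seqs r f2"
  shows "(bessel_on UNIV (tensor_seq r f1 f2) \<longleftrightarrow>
            (\<forall>k<r. bessel_on UNIV (f1 k) \<and> bessel_on UNIV (f2 k)))
       \<and> (frame_on UNIV (tensor_seq r f1 f2) \<longrightarrow>
            left_inverse_property r f1 \<and> left_inverse_property r f2)
       \<and> (riesz_basis_on UNIV (tensor_seq r f1 f2) \<longrightarrow>
            left_inverse_property r f1 \<and> left_inverse_property r f2 \<and>
            right_inverse_property r f1 \<and> right_inverse_property r f2)"
proof -
  have I: "bessel_on UNIV (tensor_seq r f1 f2) \<longleftrightarrow> (\<forall>k<r. bessel_on UNIV (f1 k) \<and> bessel_on UNIV (f2 k))"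
    by (rule part_i[OF l2_1 l2_2 indep1 indep2])
  have II: "left_inverse_property r f1 \<and> left_inverse_property r f2" if F: "frame_on UNIV (tensor_seq r f1 f2)"
  proof -
    have "bessel_on UNIV (tensor_seq r f1 f2)" using F unfolding frame_on_def by blast
    hence bb: "\<forall>k<r. bessel_on UNIV (f1 k) \<and> bessel_on UNIV (f2 k)" using I by blast
    define B1 where "B1 = (\<lambda>k. SOME B. bes (f1 k) B)"
    define B2 where "B2 = (\<lambda>k. SOME B. bes (f2 k) B)"
    have b1: "bes (f1 k) (B1 k)" if "k < r" for k
    proof -
      have "\<exists>B. bes (f1 k) B" using bb that unfolding bessel_on_UNIV_iff by blast
      thus ?thesis unfolding B1_def by (rule someI_ex)
    qed
    have b2: "bes (f2 k) (B2 k)" if "k < r" for k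
    proof -
      have "\<exists>B. bes (f2 k) B" using bb that unfolding bessel_on_UNIV_iff by blast
      thus ?thesis unfolding B2_def by (rule someI_ex)
    qed
    have "left_inverse_property r f1" by (rule concat_frame[OF l2_1 l2_2 b1 b2 F])
    moreover have "left_inverse_property r f2" by (rule concat_frame[OF l2_2 l2_1 b2 b1 frame_ts_swap[OF F]])
    ultimately show ?thesis ..
  qed
  have III: "right_inverse_property r f1 \<and> right_inverse_property r f2" if R: "riesz_basis_on UNIV (tensor_seq r f1 f2)"
  proof -
    obtain V where V: "bounded_op V" "\<And>c. is_l2 c \<Longrightarrow> An (tensor_seq r f1 f2) (V c) = c"
      using riesz_right_inv[OF R] by blast
    obtain V' where V': "bounded_op V'" "\<And>c. is_l2 c \<Longrightarrow> An (tensor_seq r f2 f1) (V' c) = c"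
      using right_inv_swap[OF V] by blast
    show ?thesis using right_part[OF l2_1 l2_2 V] right_part[OF l2_2 l2_1 V'] by blast
  qed
  have RF: "riesz_basis_on UNIV (tensor_seq r f1 f2) \<Longrightarrow> frame_on UNIV (tensor_seq r f1 f2)"
    unfolding riesz_basis_on_def by blast
  show ?thesis using I II III RF by blast
qed


end
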